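(* Consider the Hubbard model described in the context on a finite connected lattice $\mathcal{M}$ with uniform coordination number $\zeta$, and suppose that the electron number is $N_e=|\mathcal{M}|$. Then, in the limits $U\uparrow\infty$ and $s\uparrow\infty$, the ground states of the model have total spin $S_{\mathrm{tot}}=S_{\max}=N_e/2$, and they are unique up to the trivial $(2S_{\max}+1)$-fold degeneracy.
   Context: Lattice: $\mathcal{M}$ is a finite set of sites. $\mathcal{B}$ is a set of ordered pairs $(x,y)$ of distinct sites of $\mathcal{M}$ (bonds) such that for any $x,y$ at most one of $(x,y),(y,x)$ lies in $\mathcal{B}$. Put $\mathcal{E}=\mathcal{B}\cup\{(y,x):(x,y)\in\mathcal{B}\}$. We assume $\mathcal{M}$ is connected via the bonds in $\mathcal{B}$, and that every $x\in\mathcal{M}$ has exactly $\zeta$ sites $y$ with $(x,y)\in\mathcal{E}$. For each $(x,y)\in\mathcal{B}$ introduce two additional sites $u(x,y)$ and $\bar u(x,y)$; let $\mathcal{O}$ and $\bar{\mathcal{O}}$ be the sets of all $u(x,y)$ and all $\bar u(x,y)$ respectively, and let $\Lambda=\mathcal{M}\cup\mathcal{O}\cup\bar{\mathcal{O}}$. Operators: $c_{z,\sigma}$ ($z\in\Lambda$, $\sigma\in\{\uparrow,\downarrow\}$) are the standard fermion annihilation operators, $n_{z,\sigma}=c^\dagger_{z,\sigma}c_{z,\sigma}$, and $|\Phi_{\mathrm{vac}}\rangle$ is the vacuum. Fix $\mu>0$. For $x\in\mathcal{M}$, $a_{x,\sigma}=(1+2\zeta\mu^2)^{-1/2}\{c_{x,\sigma}+\mu\sum_{y:(x,y)\in\mathcal{B}}(c_{u(x,y),\sigma}-c_{\bar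 u(x,y),\sigma})+\mu\sum_{y:(y,x)\in\mathcal{B}}(c_{u(y,x),\sigma}+c_{\bar u(y,x),\sigma})\}$. For $u=u(x,y)\in\mathcal{O}$, $b_{u,\sigma}=c_{u,\sigma}-\mu(c_{x,\sigma}+c_{y,\sigma})$; for $\bar u=\bar u(x,y)\in\bar{\mathcal{O}}$, $b_{\bar u,\sigma}=c_{\bar u,\sigma}+\mu(c_{x,\sigma}-c_{y,\sigma})$. Hamiltonian, with parameters $s,t,U>0$: $H=t\sum_{(x,y)\in\mathcal{E},\sigma}a^\dagger_{x,\sigma}a_{y,\sigma}+s\sum_{v\in\mathcal{O}\cup\bar{\mathcal{O}},\sigma}b^\dagger_{v,\sigma}b_{v,\sigma}+U\sum_{z\in\Lambda}n_{z,\uparrow}n_{z,\downarrow}$. It acts on the Hilbert space with fixed electron number $N_e\le|\mathcal{M}|$. Spin: $S^+_z=c^\dagger_{z,\uparrow}c_{z,\downarrow}$, $S^-_z=c^\dagger_{z,\downarrow}c_{z,\uparrow}$, $S^{(3)}_z=\tfrac12(n_{z,\uparrow}-n_{z,\downarrow})$, $S^{(1)}_z=(S^+_z+S^-_z)/2$, $S^{(2)}_z=(S^+_z-S^-_z)/(2i)$. The total spin is $\mathbf{S}_{\mathrm{tot}}=\sum_{z\in\Lambda}\mathbf{S}_z$, the eigenvalues of $(\mathbf{S}_{\mathrm{tot}})^2$ are written $S_{\mathrm{tot}}(S_{\mathrm{tot}}+1)$, and $S_{\max}=N_e/2$. Ground states in the limits: a fixed state $|\Phi\rangle$ (independent of $s,U$)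 is a finite-energy state if $\lim_{s\uparrow\infty}\lim_{U\uparrow\infty}\langle\Phi|H|\Phi\rangle<\infty$. The ground states in the limits $U\uparrow\infty$, $s\uparrow\infty$ are the normalized $N_e$-electron states minimizing this limiting energy. *)

theory Defs
  imports Complex_Main "HOL-Library.Product_Lexorder"
begin

datatype 'a site = MS 'a | OS 'a 'a | OB 'a 'a
  (* MS x = site x of M;  OS x y = u(x,y);  OB x y = u-bar(x,y) *)

type_synonym 'a mode = "'a site \<times> bool"   (* spin: True = up, False = down *)

(* Fock space vectors: coefficients w.r.t. the occupation-number basis |S>,
   S a (finite) set of occupied modes, ordered by mode_key. *)
type_synonym 'a vec = "'a mode set \<Rightarrow> complex"

definition Edg :: "('a \<times> 'a) set \<Rightarrow> ('a \<times> 'a) set" where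
  "Edg B = B \<union> converse B"

definition Osites :: "('a \<times> 'a) set \<Rightarrow> 'a site set" where
  "Osites B = (\<lambda>(x,y). OS x y) ` B"

definition OBsites :: "('a \<times> 'a) set \<Rightarrow> 'a site set" where
  "OBsites B = (\<lambda>(x,y). OB x y) ` B"

definition Lam :: "'a set \<Rightarrow> ('a \<times> 'a) set \<Rightarrow> 'a site set" where
  "Lam M B = MS ` M \<union> Osites B \<union> OBsites B"

definition modes :: "'a set \<Rightarrow> ('a \<times> 'a) set \<Rightarrow> 'a mode set" where
  "modes M B = Lam M B \<times> UNIV"

fun site_key :: "'a site \<Rightarrow> nat \<times> 'a \<times> 'a" where
  "site_key (MS x) = (0, x, x)"
| "site_key (OS x y) = (1, x, y)"
| "site_key (OB x y) = (2, x, y)"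

definition mode_key :: "'a mode \<Rightarrow> (nat \<times> 'a \<times> 'a) \<times> bool" where
  "mode_key m = (site_key (fst m), snd m)"

definition fsign :: "'a::linorder mode set \<Rightarrow> 'a mode \<Rightarrow> complex" where
  "fsign S m = (-1) ^ card {m' \<in> S. mode_key m' < mode_key m}"

definition ann :: "'a::linorder mode \<Rightarrow> 'a vec \<Rightarrow> 'a vec" where
  "ann m \<psi> = (\<lambda>S. if m \<in> S then 0 else fsign S m * \<psi> (insert m S))"

definition cre :: "'a::linorder mode \<Rightarrow> 'a vec \<Rightarrow> 'a vec" where
  "cre m \<psi> = (\<lambda>S. if m \<in> S then fsign (S - {m}) m * \<psi> (S - {m}) else 0)"

definition nop :: "'a::linorder mode \<Rightarrow> 'a vec \<Rightarrow> 'a vec" where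
  "nop m \<psi> = cre m (ann m \<psi>)"

definition annL :: "'a set \<Rightarrow> ('a \<times> 'a) set \<Rightarrow> ('a site \<Rightarrow> complex) \<Rightarrow> bool \<Rightarrow> 'a::linorder vec \<Rightarrow> 'a vec" where
  "annL M B w \<sigma> \<psi> = (\<lambda>S. \<Sum>z\<in>Lam M B. w z * ann (z, \<sigma>) \<psi> S)"

definition creL :: "'a set \<Rightarrow> ('a \<times> 'a) set \<Rightarrow> ('a site \<Rightarrow> complex) \<Rightarrow> bool \<Rightarrow> 'a::linorder vec \<Rightarrow> 'a vec" where
  "creL M B w \<sigma> \<psi> = (\<lambda>S. \<Sum>z\<in>Lam M B. cnj (w z) * cre (z, \<sigma>) \<psi> S)"

section \<open>The operators a_x and b_v (coefficient functions)\<close>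

definition acoef :: "('a \<times> 'a) set \<Rightarrow> nat \<Rightarrow> real \<Rightarrow> 'a \<Rightarrow> 'a site \<Rightarrow> complex" where
  "acoef B zeta mu x z = complex_of_real (1 / sqrt (1 + 2 * real zeta * mu\<^sup>2)) *
     (case z of
        MS y \<Rightarrow> (if y = x then 1 else 0)
      | OS p q \<Rightarrow> (if (p,q) \<in> B \<and> (p = x \<or> q = x) then complex_of_real mu else 0)
      | OB p q \<Rightarrow> (if (p,q) \<in> B \<and> p = x then - complex_of_real mu
                  else if (p,q) \<in> B \<and> q = x then complex_of_real mu else 0))"

definition bcoef :: "real \<Rightarrow> 'a site \<Rightarrow> 'a site \<Rightarrow> complex" where
  "bcoef mu v z =
     (case v of
        MS _ \<Rightarrow> 0
      | OS x y \<Rightarrow> (case z of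
                     OS p q \<Rightarrow> (if p = x \<and> q = y then 1 else 0)
                   | MS p \<Rightarrow> (if p = x \<or> p = y then - complex_of_real mu else 0)
                   | OB _ _ \<Rightarrow> 0)
      | OB x y \<Rightarrow> (case z of
                     OB p q \<Rightarrow> (if p = x \<and> q = y then 1 else 0)
                   | MS p \<Rightarrow> (if p = x then complex_of_real mu
                              else if p = y then - complex_of_real mu else 0)
                   | OS _ _ \<Rightarrow> 0))"

definition ham :: "'a::linorder set \<Rightarrow> ('a \<times> 'a) set \<Rightarrow> nat \<Rightarrow> real \<Rightarrow> real \<Rightarrow> real \<Rightarrow> real \<Rightarrow> 'a vec \<Rightarrow> 'a vec" where
  "ham M B zeta mu t s U \<psi> = (\<lambda>S.
      complex_of_real t * (\<Sum>(x,y)\<in>Edg B. \<Sum>\<sigma>\<in>(UNIV::bool set).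
          creL M B (acoef B zeta mu x) \<sigma> (annL M B (acoef B zeta mu y) \<sigma> \<psi>) S)
    + complex_of_real s * (\<Sum>v\<in>Osites B \<union> OBsites B. \<Sum>\<sigma>\<in>(UNIV::bool set).
          creL M B (bcoef mu v) \<sigma> (annL M B (bcoef mu v) \<sigma> \<psi>) S)
    + complex_of_real U * (\<Sum>z\<in>Lam M B. nop (z, True) (nop (z, False) \<psi>) S))"

definition inner_F :: "'a set \<Rightarrow> ('a \<times> 'a) set \<Rightarrow> 'a vec \<Rightarrow> 'a vec \<Rightarrow> complex" where
  "inner_F M B \<phi> \<psi> = (\<Sum>S\<in>Pow (modes M B). cnj (\<phi> S) * \<psi> S)"

definition Ne_space :: "'a set \<Rightarrow> ('a \<times> 'a) set \<Rightarrow> nat \<Rightarrow> 'a vec \<Rightarrow> bool" where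
  "Ne_space M B N \<psi> \<longleftrightarrow> (\<forall>S. \<psi> S \<noteq> 0 \<longrightarrow> S \<subseteq> modes M B \<and> card S = N)"

definition energy :: "'a::linorder set \<Rightarrow> ('a \<times> 'a) set \<Rightarrow> nat \<Rightarrow> real \<Rightarrow> real \<Rightarrow> real \<Rightarrow> real \<Rightarrow> 'a vec \<Rightarrow> real" where
  "energy M B zeta mu t s U \<Phi> = Re (inner_F M B \<Phi> (ham M B zeta mu t s U \<Phi>))"

definition lim_energy_is :: "'a::linorder set \<Rightarrow> ('a \<times> 'a) set \<Rightarrow> nat \<Rightarrow> real \<Rightarrow> real \<Rightarrow> 'a vec \<Rightarrow> real \<Rightarrow> bool" where
  "lim_energy_is M B zeta mu t \<Phi> E \<longleftrightarrow>
     (\<exists>g. (\<forall>\<^sub>F s in at_top. ((\<lambda>U. energy M B zeta mu t s U \<Phi>) \<longlongrightarrow> g s) at_top)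
          \<and> (g \<longlongrightarrow> E) at_top)"

definition finite_energy :: "'a::linorder set \<Rightarrow> ('a \<times> 'a) set \<Rightarrow> nat \<Rightarrow> real \<Rightarrow> real \<Rightarrow> 'a vec \<Rightarrow> bool" where
  "finite_energy M B zeta mu t \<Phi> \<longleftrightarrow> (\<exists>E. lim_energy_is M B zeta mu t \<Phi> E)"

definition lim_energy :: "'a::linorder set \<Rightarrow> ('a \<times> 'a) set \<Rightarrow> nat \<Rightarrow> real \<Rightarrow> real \<Rightarrow> 'a vec \<Rightarrow> real" where
  "lim_energy M B zeta mu t \<Phi> = (THE E. lim_energy_is M B zeta mu t \<Phi> E)"

definition ground_state :: "'a::linorder set \<Rightarrow> ('a \<times> 'a) set \<Rightarrow> nat \<Rightarrow> real \<Rightarrow> real \<Rightarrow> nat \<Rightarrow> 'a vec \<Rightarrow> bool" where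
  "ground_state M B zeta mu t N \<Phi> \<longleftrightarrow>
     Ne_space M B N \<Phi> \<and> inner_F M B \<Phi> \<Phi> = 1 \<and> finite_energy M B zeta mu t \<Phi> \<and>
     (\<forall>\<Psi>. Ne_space M B N \<Psi> \<and> inner_F M B \<Psi> \<Psi> = 1 \<and> finite_energy M B zeta mu t \<Psi>
            \<longrightarrow> lim_energy M B zeta mu t \<Phi> \<le> lim_energy M B zeta mu t \<Psi>)"

definition Splus :: "'a::linorder site \<Rightarrow> 'a vec \<Rightarrow> 'a vec" where
  "Splus z \<psi> = cre (z, True) (ann (z, False) \<psi>)"

definition Sminus :: "'a::linorder site \<Rightarrow> 'a vec \<Rightarrow> 'a vec" where
  "Sminus z \<psi> = cre (z, False) (ann (z, True) \<psi>)"

definition S1 :: "'a::linorder site \<Rightarrow> 'a vec \<Rightarrow> 'a vec" where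
  "S1 z \<psi> = (\<lambda>S. (Splus z \<psi> S + Sminus z \<psi> S) / 2)"

definition S2 :: "'a::linorder site \<Rightarrow> 'a vec \<Rightarrow> 'a vec" where
  "S2 z \<psi> = (\<lambda>S. (Splus z \<psi> S - Sminus z \<psi> S) / (2 * \<i>))"

definition S3 :: "'a::linorder site \<Rightarrow> 'a vec \<Rightarrow> 'a vec" where
  "S3 z \<psi> = (\<lambda>S. (nop (z, True) \<psi> S - nop (z, False) \<psi> S) / 2)"

definition Stot :: "'a set \<Rightarrow> ('a \<times> 'a) set \<Rightarrow> ('a::linorder site \<Rightarrow> 'a vec \<Rightarrow> 'a vec) \<Rightarrow> 'a vec \<Rightarrow> 'a vec" where
  "Stot M B Sop \<psi> = (\<lambda>S. \<Sum>z\<in>Lam M B. Sop z \<psi> S)"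

definition Stot_sq :: "'a::linorder set \<Rightarrow> ('a \<times> 'a) set \<Rightarrow> 'a vec \<Rightarrow> 'a vec" where
  "Stot_sq M B \<psi> = (\<lambda>S. Stot M B S1 (Stot M B S1 \<psi>) S + Stot M B S2 (Stot M B S2 \<psi>) S
                        + Stot M B S3 (Stot M B S3 \<psi>) S)"

end

theory Submission
  imports Defs
begin

lemma mode_key_inj: "mode_key m = mode_key m' \<Longrightarrow> m = m'"
  apply (cases m; cases m')
  subgoal for a b a' b'
    by (cases a; cases a'; auto simp: mode_key_def)
  done

definition fin_supp :: "'a vec \<Rightarrow> bool" where
  "fin_supp \<psi> \<longleftrightarrow> (\<forall>S. infinite S \<longrightarrow> \<psi> S = 0)"

lemma fsign_sq[simp]: "fsign S m * fsign S m = 1"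
  by (simp add: fsign_def power_mult_distrib[symmetric])

lemma fsign_nz[simp]: "fsign S m \<noteq> 0"
  by (simp add: fsign_def)

lemma cnj_fsign[simp]: "cnj (fsign S m) = fsign S m"
  by (simp add: fsign_def)

lemma fsign_insert:
  assumes "finite S" "m' \<notin> S"
  shows "fsign (insert m' S) m = (if mode_key m' < mode_key m then -1 else 1) * fsign S m"
proof -
  have "{m''\<in>insert m' S. mode_key m'' < mode_key m} =
    (if mode_key m' < mode_key m then insert m' {m''\<in>S. mode_key m'' < mode_key m}
     else {m''\<in>S. mode_key m'' < mode_key m})" by auto
  then show ?thesis using assms by (simp add: fsign_def)
qed

lemma fsign_swap:
  assumes "finite S" "a \<notin> S" "b \<notin> S" "a \<noteq> b"
  shows "fsign S a * fsign (insert a S) b = - (fsign S b * fsign (insert b S) a)"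
proof -
  have "mode_key a \<noteq> mode_key b" using assms(4) mode_key_inj by metis
  then have "mode_key a < mode_key b \<or> mode_key b < mode_key a" by auto
  then show ?thesis using assms
    by (auto simp: fsign_insert)
qed

lemma fsign_swap2:
  assumes "finite S" "a \<notin> S" "b \<notin> S" "a \<noteq> b"
  shows "fsign (insert a S) b * fsign (insert b S) a = - (fsign S a * fsign S b)"
proof -
  have "mode_key a \<noteq> mode_key b" using assms(4) mode_key_inj by metis
  then have "mode_key a < mode_key b \<or> mode_key b < mode_key a" by auto
  then show ?thesis using assms
    by (auto simp: fsign_insert)
qed

lemma ann_ann: "fin_supp \<psi> \<Longrightarrow> ann a (ann b \<psi>) S = - ann b (ann a \<psi>) S"
proof (cases "a = b")
  case True then show ?thesis by (simp add: ann_def)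
next
  case F: False
  assume fs: "fin_supp \<psi>"
  show ?thesis
  proof (cases "finite S")
    case False
    then show ?thesis using fs by (simp add: ann_def fin_supp_def)
  next
    case True
    then show ?thesis using fsign_swap[OF True, of a b] F
      by (auto simp: ann_def insert_commute mult.assoc[symmetric])
  qed
qed

lemma cre_cre: "fin_supp \<psi> \<Longrightarrow> cre a (cre b \<psi>) S = - cre b (cre a \<psi>) S"
proof (cases "a = b")
  case True then show ?thesis by (simp add: cre_def)
next
  case F: False
  assume fs: "fin_supp \<psi>"
  show ?thesis
  proof (cases "finite S")
    case False
    then show ?thesis using fs by (simp add: cre_def fin_supp_def)
  next
    case True
    show ?thesis
    proof (cases "a \<in> S \<and> b \<in> S")
      case True
      define T where "T = S - {a} - {b}"
      have fT: "finite T" using \<open>finite S\<close> by (simp add: T_def)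
      have e1: "S - {a} = insert b T" "S - {b} = insert a T" "S - {a} - {b} = T" "S - {b} - {a} = T"
        using True F by (auto simp: T_def)
      have "a \<notin> T" "b \<notin> T" by (auto simp: T_def)
      then show ?thesis using fsign_swap[OF fT, of a b] F True e1
        by (simp add: cre_def algebra_simps)
    next
      case False
      then show ?thesis by (auto simp: cre_def)
    qed
  qed
qed

lemma ann_cre: "fin_supp \<psi> \<Longrightarrow> ann a (cre b \<psi>) S = (if a = b then \<psi> S else 0) - cre b (ann a \<psi>) S"
proof (cases "a = b")
  case True
  then show ?thesis by (auto simp: ann_def cre_def insert_absorb)
next
  case F: False
  assume fs: "fin_supp \<psi>"
  show ?thesis
  proof (cases "finite S")
    case False
    then show ?thesis using fs F by (simp add: cre_def ann_def fin_supp_def)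
  next
    case True
    show ?thesis
    proof (cases "a \<notin> S \<and> b \<in> S")
      case True
      define T where "T = S - {b}"
      have fT: "finite T" using \<open>finite S\<close> by (simp add: T_def)
      have e1: "S = insert b T" "insert a S - {b} = insert a T"
        using True F by (auto simp: T_def)
      have "a \<notin> T" "b \<notin> T" using True by (auto simp: T_def)
      then have h2: "fsign (insert b T) a * fsign (insert a T) b = - (fsign T b * fsign T a)"
        using fsign_swap2[OF fT, of a b] F by (simp add: mult.commute)
      show ?thesis using h2 F True e1 \<open>b \<notin> T\<close>
        by (simp add: cre_def ann_def mult.assoc[symmetric])
    next
      case False
      then show ?thesis using F by (auto simp: cre_def ann_def)
    qed
  qed
qed

lemma fin_supp_ann: "fin_supp \<psi> \<Longrightarrow> fin_supp (ann a \<psi>)"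
  by (simp add: fin_supp_def ann_def)
lemma fin_supp_cre: "fin_supp \<psi> \<Longrightarrow> fin_supp (cre a \<psi>)"
  by (simp add: fin_supp_def cre_def)


lemma ann_add[simp]: "ann m (\<lambda>S. f S + g S) = (\<lambda>S. ann m f S + ann m g S)"
  by (auto simp: ann_def fun_eq_iff algebra_simps)
lemma ann_diff[simp]: "ann m (\<lambda>S. f S - g S) = (\<lambda>S. ann m f S - ann m g S)"
  by (auto simp: ann_def fun_eq_iff algebra_simps)
lemma ann_uminus[simp]: "ann m (\<lambda>S. - f S) = (\<lambda>S. - ann m f S)"
  by (auto simp: ann_def fun_eq_iff algebra_simps)
lemma ann_cmult[simp]: "ann m (\<lambda>S. c * f S) = (\<lambda>S. c * ann m f S)"
  by (auto simp: ann_def fun_eq_iff algebra_simps)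
lemma ann_divide[simp]: "ann m (\<lambda>S. f S / c) = (\<lambda>S. ann m f S / c)"
  by (auto simp: ann_def fun_eq_iff algebra_simps)
lemma ann_zero[simp]: "ann m (\<lambda>S. 0) = (\<lambda>S. 0)"
  by (auto simp: ann_def fun_eq_iff)
lemma ann_sum[simp]: "ann m (\<lambda>S. \<Sum>i\<in>I. f i S) = (\<lambda>S. \<Sum>i\<in>I. ann m (f i) S)"
  by (auto simp: ann_def fun_eq_iff sum_distrib_left)

lemma cre_add[simp]: "cre m (\<lambda>S. f S + g S) = (\<lambda>S. cre m f S + cre m g S)"
  by (auto simp: cre_def fun_eq_iff algebra_simps)
lemma cre_diff[simp]: "cre m (\<lambda>S. f S - g S) = (\<lambda>S. cre m f S - cre m g S)"
  by (auto simp: cre_def fun_eq_iff algebra_simps)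
lemma cre_uminus[simp]: "cre m (\<lambda>S. - f S) = (\<lambda>S. - cre m f S)"
  by (auto simp: cre_def fun_eq_iff algebra_simps)
lemma cre_cmult[simp]: "cre m (\<lambda>S. c * f S) = (\<lambda>S. c * cre m f S)"
  by (auto simp: cre_def fun_eq_iff algebra_simps)
lemma cre_divide[simp]: "cre m (\<lambda>S. f S / c) = (\<lambda>S. cre m f S / c)"
  by (auto simp: cre_def fun_eq_iff algebra_simps)
lemma cre_zero[simp]: "cre m (\<lambda>S. 0) = (\<lambda>S. 0)"
  by (auto simp: cre_def fun_eq_iff)
lemma cre_sum[simp]: "cre m (\<lambda>S. \<Sum>i\<in>I. f i S) = (\<lambda>S. \<Sum>i\<in>I. cre m (f i) S)"
  by (auto simp: cre_def fun_eq_iff sum_distrib_left)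

lemma ann_cre_fun: "fin_supp \<psi> \<Longrightarrow> ann a (cre b \<psi>) = (\<lambda>S. (if a = b then \<psi> S else 0) - cre b (ann a \<psi>) S)"
  using ann_cre by blast
lemma ann_ann_fun: "fin_supp \<psi> \<Longrightarrow> ann a (ann b \<psi>) = (\<lambda>S. - ann b (ann a \<psi>) S)"
  using ann_ann by blast

lemma K1: "fin_supp \<psi> \<Longrightarrow> cre a (ann b (cre c \<psi>)) S = (if b = c then cre a \<psi> S else 0) + cre c (cre a (ann b \<psi>)) S"
proof -
  assume f: "fin_supp \<psi>"
  have "cre a (ann b (cre c \<psi>)) S = cre a (\<lambda>S. (if b = c then \<psi> S else 0) - cre c (ann b \<psi>) S) S"
    by (simp add: ann_cre_fun[OF f])
  also have "\<dots> = (if b = c then cre a \<psi> S else 0) - cre a (cre c (ann b \<psi>)) S"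
    by (cases "b = c") simp_all
  also have "\<dots> = (if b = c then cre a \<psi> S else 0) + cre c (cre a (ann b \<psi>)) S"
    using cre_cre[OF fin_supp_ann[OF f], of a c b S] by simp
  finally show ?thesis .
qed

lemma K2: "fin_supp \<psi> \<Longrightarrow> cre a (ann b (ann c \<psi>)) S = ann c (cre a (ann b \<psi>)) S - (if a = c then ann b \<psi> S else 0)"
proof -
  assume f: "fin_supp \<psi>"
  have "cre a (ann b (ann c \<psi>)) S = - cre a (ann c (ann b \<psi>)) S"
    by (simp add: ann_ann_fun[OF f, of b c])
  also have "cre a (ann c (ann b \<psi>)) S = (if c = a then ann b \<psi> S else 0) - ann c (cre a (ann b \<psi>)) S"
    using ann_cre[OF fin_supp_ann[OF f], of c a b S] by simp
  finally show ?thesis by auto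
qed

lemma K3: "fin_supp \<psi> \<Longrightarrow> cre a (ann b (cre c (ann d \<psi>))) S =
   (if b = c then cre a (ann d \<psi>) S else 0) - (if a = d then cre c (ann b \<psi>) S else 0)
   + cre c (ann d (cre a (ann b \<psi>))) S"
proof -
  assume f: "fin_supp \<psi>"
  have fd: "fin_supp (ann d \<psi>)" using fin_supp_ann[OF f] .
  have e: "cre a (ann b (ann d \<psi>)) = (\<lambda>S. ann d (cre a (ann b \<psi>)) S - (if a = d then ann b \<psi> S else 0))"
    using K2[OF f] by blast
  have "cre a (ann b (cre c (ann d \<psi>))) S = (if b = c then cre a (ann d \<psi>) S else 0) + cre c (cre a (ann b (ann d \<psi>))) S"
    using K1[OF fd] .
  also have "cre c (cre a (ann b (ann d \<psi>))) S = cre c (ann d (cre a (ann b \<psi>))) S - (if a = d then cre c (ann b \<psi>) S else 0)"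
    unfolding e by (cases "a = d") simp_all
  finally show ?thesis by simp
qed


section \<open>Linear operators\<close>

definition linop :: "('a vec \<Rightarrow> 'a vec) \<Rightarrow> bool" where
  "linop F \<longleftrightarrow> (\<forall>f g. F (\<lambda>S. f S + g S) = (\<lambda>S. F f S + F g S)) \<and> (\<forall>c f. F (\<lambda>S. c * f S) = (\<lambda>S. c * F f S))"

lemma linop_add: "linop F \<Longrightarrow> F (\<lambda>S. f S + g S) = (\<lambda>S. F f S + F g S)"
  by (simp add: linop_def)
lemma linop_cmult: "linop F \<Longrightarrow> F (\<lambda>S. c * f S) = (\<lambda>S. c * F f S)"
  by (simp add: linop_def)
lemma linop_zero: "linop F \<Longrightarrow> F (\<lambda>S. 0) = (\<lambda>S. 0)"
  using linop_cmult[of F 0 "\<lambda>S. 0"] by simp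
lemma linop_uminus: "linop F \<Longrightarrow> F (\<lambda>S. - f S) = (\<lambda>S. - F f S)"
  using linop_cmult[of F "-1" f] by simp
lemma linop_diff: "linop F \<Longrightarrow> F (\<lambda>S. f S - g S) = (\<lambda>S. F f S - F g S)"
  using linop_add[of F f "\<lambda>S. - g S"] linop_uminus[of F g] by simp
lemma linop_divide: "linop F \<Longrightarrow> F (\<lambda>S. f S / c) = (\<lambda>S. F f S / c)"
  using linop_cmult[of F "1/c" f] by (simp add: divide_inverse mult.commute)
lemma linop_sum: "linop F \<Longrightarrow> F (\<lambda>S. \<Sum>i\<in>I. f i S) = (\<lambda>S. \<Sum>i\<in>I. F (f i) S)"
proof (induction I rule: infinite_finite_induct)
  case (infinite A) then show ?case by (simp add: linop_zero)
next
  case empty then show ?case by (simp add: linop_zero)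
next
  case (insert x A)
  then show ?case using linop_add[OF insert.prems, of "f x" "\<lambda>S. \<Sum>i\<in>A. f i S"] by simp
qed

lemma linop_ann: "linop (ann m)" by (simp add: linop_def)
lemma linop_cre: "linop (cre m)" by (simp add: linop_def)
lemma linop_comp: "linop F \<Longrightarrow> linop G \<Longrightarrow> linop (\<lambda>\<psi>. F (G \<psi>))"
  by (simp add: linop_def)
lemma linop_sumop: assumes "\<And>i. i \<in> I \<Longrightarrow> linop (F i)" shows "linop (\<lambda>\<psi> S. \<Sum>i\<in>I. c i * F i \<psi> S)"
proof -
  have a: "\<And>i f g. i\<in>I \<Longrightarrow> F i (\<lambda>S. f S + g S) = (\<lambda>S. F i f S + F i g S)" using assms linop_add by blast
  have m: "\<And>i c f. i\<in>I \<Longrightarrow> F i (\<lambda>S. c * f S) = (\<lambda>S. c * F i f S)" using assms linop_cmult by blast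
  show ?thesis unfolding linop_def fun_eq_iff
  proof (intro conjI allI)
    fix f g S
    show "(\<Sum>i\<in>I. c i * F i (\<lambda>S. f S + g S) S) = (\<Sum>i\<in>I. c i * F i f S) + (\<Sum>i\<in>I. c i * F i g S)"
      by (simp add: sum.distrib[symmetric] algebra_simps a cong: sum.cong)
  next
    fix c' f S
    show "(\<Sum>i\<in>I. c i * F i (\<lambda>S. c' * f S) S) = c' * (\<Sum>i\<in>I. c i * F i f S)"
      by (simp add: sum_distrib_left algebra_simps m cong: sum.cong)
  qed
qed

lemma linop_sumop1: "(\<And>i. i \<in> I \<Longrightarrow> linop (F i)) \<Longrightarrow> linop (\<lambda>\<psi> S. \<Sum>i\<in>I. F i \<psi> S)"
  using linop_sumop[of I F "\<lambda>_. 1"] by simp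

lemma linop_annL: "linop (annL M B w \<sigma>)"
  unfolding annL_def[abs_def] by (rule linop_sumop) (rule linop_ann)
lemma linop_creL: "linop (creL M B w \<sigma>)"
  unfolding creL_def[abs_def] by (rule linop_sumop) (rule linop_cre)
lemma linop_Sminus: "linop (Sminus z)"
  unfolding Sminus_def[abs_def] by (rule linop_comp[OF linop_cre linop_ann])
lemma linop_Splus: "linop (Splus z)"
  unfolding Splus_def[abs_def] by (rule linop_comp[OF linop_cre linop_ann])
lemma linop_nop: "linop (nop m)"
  unfolding nop_def[abs_def] by (rule linop_comp[OF linop_cre linop_ann])
lemma linop_S3: "linop (S3 z)"
  unfolding S3_def[abs_def] linop_def
  by (auto simp: linop_add[OF linop_nop] linop_cmult[OF linop_nop] fun_eq_iff field_simps)
lemma linop_Stot: "(\<And>z. linop (Sop z)) \<Longrightarrow> linop (Stot M B Sop)"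
  unfolding Stot_def[abs_def] by (rule linop_sumop1)

lemma fin_supp_annL: "fin_supp \<psi> \<Longrightarrow> fin_supp (annL M B w \<sigma> \<psi>)"
  unfolding fin_supp_def annL_def ann_def by (auto intro!: sum.neutral)
lemma fin_supp_creL: "fin_supp \<psi> \<Longrightarrow> fin_supp (creL M B w \<sigma> \<psi>)"
  unfolding fin_supp_def creL_def cre_def by (auto intro!: sum.neutral)
lemma fin_supp_Sminus: "fin_supp \<psi> \<Longrightarrow> fin_supp (Stot M B Sminus \<psi>)"
  unfolding fin_supp_def Stot_def Sminus_def cre_def ann_def by (auto intro!: sum.neutral)
lemma fin_supp_Splus: "fin_supp \<psi> \<Longrightarrow> fin_supp (Stot M B Splus \<psi>)"
  unfolding fin_supp_def Stot_def Splus_def cre_def ann_def by (auto intro!: sum.neutral)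

section \<open>Anticommutators of the smeared operators\<close>

lemma AL_CL: assumes "fin_supp \<psi>" and fL: "finite (Lam M B)"
  shows "annL M B w \<sigma> (creL M B w' \<sigma>' \<psi>) S =
    (if \<sigma> = \<sigma>' then (\<Sum>z\<in>Lam M B. w z * cnj (w' z)) * \<psi> S else 0) - creL M B w' \<sigma>' (annL M B w \<sigma> \<psi>) S"
proof -
  have "annL M B w \<sigma> (creL M B w' \<sigma>' \<psi>) S =
     (\<Sum>z\<in>Lam M B. \<Sum>z'\<in>Lam M B. w z * cnj (w' z') * ann (z,\<sigma>) (cre (z',\<sigma>') \<psi>) S)"
    unfolding annL_def creL_def[abs_def] by (simp add: sum_distrib_left mult.assoc)
  also have "\<dots> = (\<Sum>z\<in>Lam M B. \<Sum>z'\<in>Lam M B. w z * cnj (w' z') * (if z = z' \<and> \<sigma> = \<sigma>' then \<psi> S else 0))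
      - (\<Sum>z\<in>Lam M B. \<Sum>z'\<in>Lam M B. w z * cnj (w' z') * cre (z',\<sigma>') (ann (z,\<sigma>) \<psi>) S)"
    by (simp add: ann_cre[OF assms(1)] right_diff_distrib sum_subtractf)
  also have "(\<Sum>z\<in>Lam M B. \<Sum>z'\<in>Lam M B. w z * cnj (w' z') * (if z = z' \<and> \<sigma> = \<sigma>' then \<psi> S else 0))
     = (if \<sigma> = \<sigma>' then (\<Sum>z\<in>Lam M B. w z * cnj (w' z)) * \<psi> S else 0)"
  proof (cases "\<sigma> = \<sigma>'")
    case True
    have "(\<Sum>z\<in>Lam M B. \<Sum>z'\<in>Lam M B. w z * cnj (w' z') * (if z = z' then \<psi> S else 0))
       = (\<Sum>z\<in>Lam M B. \<Sum>z'\<in>Lam M B. if z' = z then w z * cnj (w' z') * \<psi> S else 0)"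
      by (intro sum.cong) auto
    also have "\<dots> = (\<Sum>z\<in>Lam M B. if z \<in> Lam M B then w z * cnj (w' z) * \<psi> S else 0)"
      by (subst sum.delta[OF fL]) simp
    also have "\<dots> = (\<Sum>z\<in>Lam M B. w z * cnj (w' z)) * \<psi> S"
      by (simp add: sum_distrib_right)
    finally show ?thesis using True by simp
  qed simp
  also have "(\<Sum>z\<in>Lam M B. \<Sum>z'\<in>Lam M B. w z * cnj (w' z') * cre (z',\<sigma>') (ann (z,\<sigma>) \<psi>) S)
      = creL M B w' \<sigma>' (annL M B w \<sigma> \<psi>) S"
    unfolding creL_def annL_def[abs_def]
    by (subst sum.swap) (simp add: sum_distrib_left mult.assoc mult.left_commute)
  finally show ?thesis .
qed

lemma CL_CL: assumes "fin_supp \<psi>"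
  shows "creL M B w \<sigma> (creL M B w' \<sigma>' \<psi>) S = - creL M B w' \<sigma>' (creL M B w \<sigma> \<psi>) S"
proof -
  have "creL M B w \<sigma> (creL M B w' \<sigma>' \<psi>) S =
     (\<Sum>z\<in>Lam M B. \<Sum>z'\<in>Lam M B. cnj (w z) * cnj (w' z') * cre (z,\<sigma>) (cre (z',\<sigma>') \<psi>) S)"
    unfolding creL_def[abs_def] by (simp add: sum_distrib_left mult.assoc)
  also have "\<dots> = - (\<Sum>z\<in>Lam M B. \<Sum>z'\<in>Lam M B. cnj (w z) * cnj (w' z') * cre (z',\<sigma>') (cre (z,\<sigma>) \<psi>) S)"
    unfolding sum_negf[symmetric] by (intro sum.cong refl) (subst cre_cre[OF assms], simp)
  also have "(\<Sum>z\<in>Lam M B. \<Sum>z'\<in>Lam M B. cnj (w z) * cnj (w' z') * cre (z',\<sigma>') (cre (z,\<sigma>) \<psi>) S)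
      = creL M B w' \<sigma>' (creL M B w \<sigma> \<psi>) S"
    unfolding creL_def[abs_def]
    by (subst sum.swap) (simp add: sum_distrib_left mult.assoc mult.left_commute)
  finally show ?thesis .
qed

lemma CL_CL_same: assumes "fin_supp \<psi>"
  shows "creL M B w \<sigma> (creL M B w \<sigma> \<psi>) S = 0"
  using CL_CL[OF assms, where w=w and w'=w and \<sigma>=\<sigma> and \<sigma>'=\<sigma> and S=S] by simp


lemma delta2: "finite A \<Longrightarrow> (\<Sum>z\<in>A. \<Sum>z'\<in>A. if z = z' then f z z' else 0) = (\<Sum>z\<in>A. f z z)"
proof -
  assume fA: "finite A"
  have "(\<Sum>z\<in>A. \<Sum>z'\<in>A. if z = z' then f z z' else 0) = (\<Sum>z\<in>A. \<Sum>z'\<in>A. if z' = z then f z z' else 0)"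
    by (intro sum.cong) auto
  also have "\<dots> = (\<Sum>z\<in>A. f z z)" using fA by (simp add: sum.delta)
  finally show ?thesis .
qed

lemma Sm_CL: assumes f: "fin_supp \<psi>" and fL: "finite (Lam M B)"
  shows "Stot M B Sminus (creL M B w \<sigma> \<psi>) S = (if \<sigma> then creL M B w False \<psi> S else 0) + creL M B w \<sigma> (Stot M B Sminus \<psi>) S"
proof -
  have "Stot M B Sminus (creL M B w \<sigma> \<psi>) S = (\<Sum>z\<in>Lam M B. \<Sum>z'\<in>Lam M B. cnj (w z') * cre (z,False) (ann (z,True) (cre (z',\<sigma>) \<psi>)) S)"
    unfolding Stot_def Sminus_def creL_def[abs_def] by simp
  also have "\<dots> = (\<Sum>z\<in>Lam M B. \<Sum>z'\<in>Lam M B. if z = z' then (if \<sigma> then cnj (w z') * cre (z,False) \<psi> S else 0) else 0)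
     + (\<Sum>z\<in>Lam M B. \<Sum>z'\<in>Lam M B. cnj (w z') * cre (z',\<sigma>) (cre (z,False) (ann (z,True) \<psi>)) S)"
  proof -
    have e: "\<And>z z'. cnj (w z') * cre (z,False) (ann (z,True) (cre (z',\<sigma>) \<psi>)) S = (if z = z' then (if \<sigma> then cnj (w z') * cre (z,False) \<psi> S else 0) else 0) + cnj (w z') * cre (z',\<sigma>) (cre (z,False) (ann (z,True) \<psi>)) S"
      by (subst K1[OF f]) (auto simp: distrib_left)
    show ?thesis unfolding e by (simp add: sum.distrib)
  qed
  also have "(\<Sum>z\<in>Lam M B. \<Sum>z'\<in>Lam M B. if z = z' then (if \<sigma> then cnj (w z') * cre (z,False) \<psi> S else 0) else 0)
      = (if \<sigma> then creL M B w False \<psi> S else 0)"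
    by (subst delta2[OF fL]) (simp add: creL_def)
  also have "(\<Sum>z\<in>Lam M B. \<Sum>z'\<in>Lam M B. cnj (w z') * cre (z',\<sigma>) (cre (z,False) (ann (z,True) \<psi>)) S)
      = creL M B w \<sigma> (Stot M B Sminus \<psi>) S"
    unfolding creL_def Stot_def Sminus_def by (subst sum.swap) (simp add: sum_distrib_left)
  finally show ?thesis .
qed

lemma Sm_AL: assumes f: "fin_supp \<psi>" and fL: "finite (Lam M B)"
  shows "Stot M B Sminus (annL M B w \<sigma> \<psi>) S = annL M B w \<sigma> (Stot M B Sminus \<psi>) S - (if \<sigma> then 0 else annL M B w True \<psi> S)"
proof -
  have "Stot M B Sminus (annL M B w \<sigma> \<psi>) S = (\<Sum>z\<in>Lam M B. \<Sum>z'\<in>Lam M B. w z' * cre (z,False) (ann (z,True) (ann (z',\<sigma>) \<psi>)) S)"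
    unfolding Stot_def Sminus_def annL_def[abs_def] by simp
  also have "\<dots> = (\<Sum>z\<in>Lam M B. \<Sum>z'\<in>Lam M B. w z' * ann (z',\<sigma>) (cre (z,False) (ann (z,True) \<psi>)) S)
     - (\<Sum>z\<in>Lam M B. \<Sum>z'\<in>Lam M B. if z = z' then (if \<sigma> then 0 else w z' * ann (z,True) \<psi> S) else 0)"
  proof -
    have e: "\<And>z z'. w z' * cre (z,False) (ann (z,True) (ann (z',\<sigma>) \<psi>)) S = w z' * ann (z',\<sigma>) (cre (z,False) (ann (z,True) \<psi>)) S - (if z = z' then (if \<sigma> then 0 else w z' * ann (z,True) \<psi> S) else 0)"
      by (subst K2[OF f]) (auto simp: right_diff_distrib)
    show ?thesis unfolding e by (simp add: sum_subtractf)
  qed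
  also have "(\<Sum>z\<in>Lam M B. \<Sum>z'\<in>Lam M B. if z = z' then (if \<sigma> then 0 else w z' * ann (z,True) \<psi> S) else 0)
      = (if \<sigma> then 0 else annL M B w True \<psi> S)"
    by (subst delta2[OF fL]) (simp add: annL_def)
  also have "(\<Sum>z\<in>Lam M B. \<Sum>z'\<in>Lam M B. w z' * ann (z',\<sigma>) (cre (z,False) (ann (z,True) \<psi>)) S)
      = annL M B w \<sigma> (Stot M B Sminus \<psi>) S"
    unfolding annL_def Stot_def Sminus_def by (subst sum.swap) (simp add: sum_distrib_left)
  finally show ?thesis .
qed

lemma Sp_Sm: assumes f: "fin_supp \<psi>" and fL: "finite (Lam M B)"
  shows "Stot M B Splus (Stot M B Sminus \<psi>) S = Stot M B Sminus (Stot M B Splus \<psi>) S + 2 * Stot M B S3 \<psi> S"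
proof -
  have "Stot M B Splus (Stot M B Sminus \<psi>) S = (\<Sum>z\<in>Lam M B. \<Sum>z'\<in>Lam M B. cre (z,True) (ann (z,False) (cre (z',False) (ann (z',True) \<psi>))) S)"
    unfolding Stot_def Sminus_def Splus_def by simp
  also have "\<dots> = (\<Sum>z\<in>Lam M B. \<Sum>z'\<in>Lam M B. if z = z' then cre (z,True) (ann (z',True) \<psi>) S - cre (z',False) (ann (z,False) \<psi>) S else 0)
     + (\<Sum>z\<in>Lam M B. \<Sum>z'\<in>Lam M B. cre (z',False) (ann (z',True) (cre (z,True) (ann (z,False) \<psi>))) S)"
  proof -
    have e: "\<And>z z'. cre (z,True) (ann (z,False) (cre (z',False) (ann (z',True) \<psi>))) S = (if z = z' then cre (z,True) (ann (z',True) \<psi>) S - cre (z',False) (ann (z,False) \<psi>) S else 0) + cre (z',False) (ann (z',True) (cre (z,True) (ann (z,False) \<psi>))) S"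
      by (subst K3[OF f]) auto
    show ?thesis unfolding e by (simp add: sum.distrib)
  qed
  also have "(\<Sum>z\<in>Lam M B. \<Sum>z'\<in>Lam M B. if z = z' then cre (z,True) (ann (z',True) \<psi>) S - cre (z',False) (ann (z,False) \<psi>) S else 0)
     = 2 * Stot M B S3 \<psi> S"
    by (subst delta2[OF fL]) (simp add: Stot_def S3_def nop_def sum_divide_distrib[symmetric])
  also have "(\<Sum>z\<in>Lam M B. \<Sum>z'\<in>Lam M B. cre (z',False) (ann (z',True) (cre (z,True) (ann (z,False) \<psi>))) S)
      = Stot M B Sminus (Stot M B Splus \<psi>) S"
    unfolding Stot_def Sminus_def Splus_def by (subst sum.swap) simp
  finally show ?thesis by simp
qed


lemma nop_eq: "nop m \<psi> S = (if m \<in> S then \<psi> S else 0)"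
  by (auto simp: nop_def cre_def ann_def insert_absorb)

lemma sum_ind_card: "finite A \<Longrightarrow> (\<Sum>x\<in>A. if P x then (1::complex) else 0) = of_nat (card {x\<in>A. P x})"
  by (simp add: sum.inter_filter[symmetric])

lemma card_split: "finite S \<Longrightarrow> card S = card {m\<in>S. P m} + card {m\<in>S. \<not> P m}"
proof -
  assume "finite S"
  moreover have "S = {m\<in>S. P m} \<union> {m\<in>S. \<not> P m}" by auto
  ultimately show ?thesis by (metis (no_types, lifting) card_Un_disjoint disjoint_iff finite_Un mem_Collect_eq)
qed

definition vac :: "'a vec" where "vac = (\<lambda>S. if S = {} then 1 else 0)"

definition ndn :: "'a mode set \<Rightarrow> nat" where "ndn S = card {m\<in>S. \<not> snd m}"

definition nodbl :: "'a vec \<Rightarrow> bool" where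
  "nodbl \<psi> \<longleftrightarrow> (\<forall>S z. (z,True) \<in> S \<and> (z,False) \<in> S \<longrightarrow> \<psi> S = 0)"

locale hub =
  fixes M :: "'a::linorder set" and B :: "('a \<times> 'a) set" and zeta :: nat and mu t :: real
  assumes finM: "finite M" and Bsub: "B \<subseteq> M \<times> M" and irr: "\<forall>(x,y)\<in>B. x \<noteq> y"
    and asy: "\<forall>x y. (x,y) \<in> B \<longrightarrow> (y,x) \<notin> B"
    and conn: "\<forall>x\<in>M. \<forall>y\<in>M. (x,y) \<in> (Edg B)\<^sup>*"
    and deg: "\<forall>x\<in>M. card {y. (x,y) \<in> Edg B} = zeta"
    and mupos: "mu > 0" and tpos: "t > 0"
begin

lemma finB: "finite B" using finite_subset[OF Bsub] finM by auto
lemma finL: "finite (Lam M B)" unfolding Lam_def Osites_def OBsites_def using finM finB by auto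
lemma finMd: "finite (modes M B)" unfolding modes_def using finL by simp

definition suppd :: "nat \<Rightarrow> nat \<Rightarrow> 'a vec \<Rightarrow> bool" where
  "suppd n k \<psi> \<longleftrightarrow> (\<forall>S. \<psi> S \<noteq> 0 \<longrightarrow> S \<subseteq> modes M B \<and> card S = n \<and> ndn S = k)"

lemma suppd_fin: "suppd n k \<psi> \<Longrightarrow> fin_supp \<psi>"
  unfolding suppd_def fin_supp_def using finMd finite_subset by blast

lemma suppd_vac: "suppd 0 0 vac"
  by (simp add: suppd_def vac_def ndn_def)

lemma suppd_CL_up: assumes "suppd n 0 \<psi>" shows "suppd (Suc n) 0 (creL M B w True \<psi>)"
  unfolding suppd_def
proof (intro allI impI)
  fix S assume "creL M B w True \<psi> S \<noteq> 0"
  then obtain z where z: "z \<in> Lam M B" "cre (z,True) \<psi> S \<noteq> 0"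
    unfolding creL_def by (auto elim: sum.not_neutral_contains_not_neutral)
  then have zS: "(z,True) \<in> S" and nz: "\<psi> (S - {(z,True)}) \<noteq> 0" by (auto simp: cre_def split: if_splits)
  define S' where "S' = S - {(z,True)}"
  have p: "S' \<subseteq> modes M B" "card S' = n" "ndn S' = 0" using assms nz unfolding suppd_def S'_def by auto
  have fS': "finite S'" using p(1) finMd finite_subset by blast
  have S: "S = insert (z,True) S'" "(z,True) \<notin> S'" using zS by (auto simp: S'_def)
  have "{m\<in>S. \<not> snd m} = {m\<in>S'. \<not> snd m}" using S by auto
  then show "S \<subseteq> modes M B \<and> card S = Suc n \<and> ndn S = 0"
    using p fS' S z(1) by (auto simp: ndn_def modes_def)
qed

lemma suppd_Sm: assumes "suppd n k \<psi>" shows "suppd n (Suc k) (Stot M B Sminus \<psi>)"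
  unfolding suppd_def
proof (intro allI impI)
  fix S assume "Stot M B Sminus \<psi> S \<noteq> 0"
  then obtain z where z: "z \<in> Lam M B" "cre (z,False) (ann (z,True) \<psi>) S \<noteq> 0"
    unfolding Stot_def Sminus_def by (auto elim: sum.not_neutral_contains_not_neutral)
  then have zS: "(z,False) \<in> S" "(z,True) \<notin> S" and nz: "\<psi> (insert (z,True) (S - {(z,False)})) \<noteq> 0"
    by (auto simp: cre_def ann_def split: if_splits)
  define S' where "S' = insert (z,True) (S - {(z,False)})"
  have p: "S' \<subseteq> modes M B" "card S' = n" "ndn S' = k" using assms nz unfolding suppd_def S'_def by auto
  have fS': "finite S'" using p(1) finMd finite_subset by blast
  have S: "S = insert (z,False) (S' - {(z,True)})" "(z,False) \<notin> S' - {(z,True)}" "(z,True) \<in> S'" "(z, False) \<notin> S'"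
    using zS by (auto simp: S'_def)
  have cS: "card S = n" using S fS' p(2) by (simp add: card_Diff_singleton) (metis One_nat_def Suc_pred card_gt_0_iff emptyE)
  have "{m\<in>S. \<not> snd m} = insert (z,False) {m\<in>S'. \<not> snd m}" using S by auto
  then have "ndn S = Suc k" using p(3) fS' S(4) by (simp add: ndn_def)
  moreover have "S \<subseteq> modes M B" using p(1) S z(1) by (auto simp: modes_def)
  ultimately show "S \<subseteq> modes M B \<and> card S = n \<and> ndn S = Suc k" using cS by simp
qed

lemma nodbl_Sm: assumes "nodbl \<psi>" shows "nodbl (Stot M B Sminus \<psi>)"
  unfolding nodbl_def
proof (intro allI impI)
  fix S :: "'a mode set" and z :: "'a site" assume zz: "(z,True) \<in> S \<and> (z,False) \<in> S"
  have "cre (z',False) (ann (z',True) \<psi>) S = 0" for z'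
  proof (cases "z' = z")
    case True then show ?thesis using zz by (auto simp: cre_def ann_def)
  next
    case False
    have "(z,True) \<in> insert (z',True) (S - {(z',False)})" "(z,False) \<in> insert (z',True) (S - {(z',False)})"
      using zz False by auto
    then show ?thesis using nodbl_def[THEN iffD1, OF assms, rule_format, where S="insert (z',True) (S - {(z',False)})" and z=z]
      by (auto simp: cre_def ann_def)
  qed
  then show "Stot M B Sminus \<psi> S = 0" by (simp add: Stot_def Sminus_def)
qed

lemma Sz_suppd: assumes "suppd n k \<psi>"
  shows "Stot M B S3 \<psi> S = (of_nat n / 2 - of_nat k) * \<psi> S"
proof -
  have t: "((if (z,True) \<in> S then \<psi> S else 0) - (if (z,False) \<in> S then \<psi> S else 0)) / 2
     = ((if (z,True) \<in> S then 1 else 0) - (if (z,False) \<in> S then 1 else 0)) / 2 * \<psi> S" for z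
    by auto
  have e: "Stot M B S3 \<psi> S = ((\<Sum>z\<in>Lam M B. if (z,True) \<in> S then 1 else 0) - (\<Sum>z\<in>Lam M B. if (z,False) \<in> S then 1 else 0)) / 2 * \<psi> S"
    unfolding Stot_def S3_def nop_eq t by (simp add: sum_subtractf[symmetric] sum_divide_distrib sum_distrib_right)
  show ?thesis
  proof (cases "\<psi> S = 0")
  case True then show ?thesis using e by simp
  next
  case False
  then have p: "S \<subseteq> modes M B" "card S = n" "ndn S = k" using assms unfolding suppd_def by auto
  have fS: "finite S" using p(1) finMd finite_subset by blast
  have c1: "card {z\<in>Lam M B. (z,b) \<in> S} = card {m\<in>S. snd m = b}" for b
  proof -
    have "{m\<in>S. snd m = b} = (\<lambda>z. (z,b)) ` {z\<in>Lam M B. (z,b) \<in> S}" using p(1) by (auto simp: modes_def image_iff)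
    moreover have "inj_on (\<lambda>z. (z,b)) {z\<in>Lam M B. (z,b) \<in> S}" by (auto simp: inj_on_def)
    ultimately show ?thesis by (simp add: card_image)
  qed
  have c2: "card S = card {m\<in>S. snd m} + card {m\<in>S. \<not> snd m}" using card_split[OF fS] .
  have "card {m\<in>S. snd m = True} = n - k" "card {m\<in>S. snd m = False} = k" using c2 p(2,3) by (simp_all add: ndn_def)
  then have "(\<Sum>z\<in>Lam M B. if (z,True) \<in> S then (1::complex) else 0) = of_nat (n - k)"
     "(\<Sum>z\<in>Lam M B. if (z,False) \<in> S then (1::complex) else 0) = of_nat k"
    using c1 by (simp_all add: sum_ind_card finL)
  moreover have "k \<le> n" using c2 p(2,3) by (simp add: ndn_def)
  ultimately have "Stot M B S3 \<psi> S = ((of_nat n - of_nat k) - of_nat k)/2 * \<psi> S" using e by (simp add: of_nat_diff)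
  then show ?thesis by (simp add: field_simps)
  qed
qed

end

context hub begin

lemma MS_Lam: "x \<in> M \<Longrightarrow> MS x \<in> Lam M B" by (simp add: Lam_def)
lemma OS_Lam: "(x,y) \<in> B \<Longrightarrow> OS x y \<in> Lam M B" by (force simp: Lam_def Osites_def)
lemma OB_Lam: "(x,y) \<in> B \<Longrightarrow> OB x y \<in> Lam M B" by (force simp: Lam_def OBsites_def)
lemma Lam_cases: "z \<in> Lam M B \<Longrightarrow> (\<And>x. z = MS x \<Longrightarrow> x \<in> M \<Longrightarrow> P) \<Longrightarrow> (\<And>x y. z = OS x y \<Longrightarrow> (x,y) \<in> B \<Longrightarrow> P)
   \<Longrightarrow> (\<And>x y. z = OB x y \<Longrightarrow> (x,y) \<in> B \<Longrightarrow> P) \<Longrightarrow> P"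
  by (auto simp: Lam_def Osites_def OBsites_def)
lemma B_M: "(x,y) \<in> B \<Longrightarrow> x \<in> M \<and> y \<in> M" using Bsub by auto
lemma B_neq: "(x,y) \<in> B \<Longrightarrow> x \<noteq> y" using irr by auto
lemma B_asym: "(x,y) \<in> B \<Longrightarrow> (y,x) \<notin> B" using asy by auto

lemma sum_Lam_restrict: "K \<subseteq> Lam M B \<Longrightarrow> (\<And>z. z \<in> Lam M B \<Longrightarrow> z \<notin> K \<Longrightarrow> f z = 0) \<Longrightarrow> (\<Sum>z\<in>Lam M B. f z) = (\<Sum>z\<in>K. f z)"
  by (rule sum.mono_neutral_right[OF finL]) auto

lemma ov_ab: assumes v: "v \<in> Osites B \<union> OBsites B" and x: "x \<in> M"
  shows "(\<Sum>z\<in>Lam M B. bcoef mu v z * cnj (acoef B zeta mu x z)) = 0"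
proof -
  from v obtain p q where pq: "(p,q) \<in> B" and "v = OS p q \<or> v = OB p q"
    by (auto simp: Osites_def OBsites_def)
  then consider "v = OS p q" | "v = OB p q" by blast
  then show ?thesis
  proof cases
    case 1
    have K: "{OS p q, MS p, MS q} \<subseteq> Lam M B" using pq B_M OS_Lam MS_Lam by auto
    have "(\<Sum>z\<in>Lam M B. bcoef mu v z * cnj (acoef B zeta mu x z)) = (\<Sum>z\<in>{OS p q, MS p, MS q}. bcoef mu v z * cnj (acoef B zeta mu x z))"
      by (rule sum_Lam_restrict[OF K]) (auto simp: 1 bcoef_def split: site.splits)
    also have "\<dots> = 0" using pq B_neq[OF pq] by (auto simp: 1 bcoef_def acoef_def)
    finally show ?thesis .
  next
    case 2
    have K: "{OB p q, MS p, MS q} \<subseteq> Lam M B" using pq B_M OB_Lam MS_Lam by auto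
    have "(\<Sum>z\<in>Lam M B. bcoef mu v z * cnj (acoef B zeta mu x z)) = (\<Sum>z\<in>{OB p q, MS p, MS q}. bcoef mu v z * cnj (acoef B zeta mu x z))"
      by (rule sum_Lam_restrict[OF K]) (auto simp: 2 bcoef_def split: site.splits)
    also have "\<dots> = 0" using pq B_neq[OF pq] by (auto simp: 2 bcoef_def acoef_def)
    finally show ?thesis .
  qed
qed

lemma ov_aa: assumes x: "x \<in> M" and y: "y \<in> M" and xy: "x \<noteq> y"
  shows "(\<Sum>z\<in>Lam M B. acoef B zeta mu y z * cnj (acoef B zeta mu x z)) = 0"
proof -
  let ?f = "\<lambda>z. acoef B zeta mu y z * cnj (acoef B zeta mu x z)"
  have MSz: "?f (MS r) = 0" for r using xy by (auto simp: acoef_def)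
  consider "(x,y) \<in> B" | "(y,x) \<in> B" | "(x,y) \<notin> B \<and> (y,x) \<notin> B" by blast
  then show ?thesis
  proof cases
    case 1
    have K: "{OS x y, OB x y} \<subseteq> Lam M B" using 1 OS_Lam OB_Lam by auto
    have "(\<Sum>z\<in>Lam M B. ?f z) = (\<Sum>z\<in>{OS x y, OB x y}. ?f z)"
    proof (rule sum_Lam_restrict[OF K])
      fix z assume "z \<in> Lam M B" "z \<notin> {OS x y, OB x y}"
      then show "?f z = 0" using xy B_asym[OF 1] MSz
        by (cases z) (auto simp: acoef_def)
    qed
    also have "\<dots> = 0" using 1 xy by (simp add: acoef_def)
    finally show ?thesis .
  next
    case 2
    have K: "{OS y x, OB y x} \<subseteq> Lam M B" using 2 OS_Lam OB_Lam by auto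
    have "(\<Sum>z\<in>Lam M B. ?f z) = (\<Sum>z\<in>{OS y x, OB y x}. ?f z)"
    proof (rule sum_Lam_restrict[OF K])
      fix z assume "z \<in> Lam M B" "z \<notin> {OS y x, OB y x}"
      then show "?f z = 0" using xy B_asym[OF 2] MSz
        by (cases z) (auto simp: acoef_def)
    qed
    also have "\<dots> = 0" using 2 xy by (simp add: acoef_def)
    finally show ?thesis .
  next
    case 3
    have "(\<Sum>z\<in>Lam M B. ?f z) = (\<Sum>z\<in>{}. ?f z)"
    proof (rule sum_Lam_restrict)
      fix z assume "z \<in> Lam M B" "z \<notin> {}"
      then show "?f z = 0" using xy 3 MSz
        by (cases z) (auto simp: acoef_def)
    qed simp
    then show ?thesis by simp
  qed
qed

lemma ov_pos: assumes x: "x \<in> M"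
  shows "(\<Sum>z\<in>Lam M B. acoef B zeta mu x z * cnj (acoef B zeta mu x z)) \<noteq> 0"
proof -
  have e: "acoef B zeta mu x z * cnj (acoef B zeta mu x z) = complex_of_real ((cmod (acoef B zeta mu x z))\<^sup>2)" for z
    by (simp add: complex_norm_square del: of_real_power)
  have "(cmod (acoef B zeta mu x (MS x)))\<^sup>2 \<le> (\<Sum>z\<in>Lam M B. (cmod (acoef B zeta mu x z))\<^sup>2)"
    by (rule member_le_sum) (auto simp: MS_Lam[OF x] finL)
  moreover have "(cmod (acoef B zeta mu x (MS x)))\<^sup>2 > 0"
  proof -
    have "1 + 2 * real zeta * mu\<^sup>2 > 0" by (simp add: add_pos_nonneg)
    then show ?thesis by (simp add: acoef_def)
  qed
  ultimately have "(\<Sum>z\<in>Lam M B. (cmod (acoef B zeta mu x z))\<^sup>2) \<noteq> 0" by linarith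
  then show ?thesis unfolding e by (simp only: of_real_sum[symmetric] of_real_eq_0_iff) simp
qed

end

lemma ann_vac: "ann m vac = (\<lambda>S. 0)"
  by (auto simp: ann_def vac_def fun_eq_iff)
lemma annL_vac: "annL M B w \<sigma> vac = (\<lambda>S. 0)"
  by (simp add: annL_def ann_vac)

context hub begin

definition pc :: "'a list \<Rightarrow> 'a vec" where
  "pc xs = foldr (\<lambda>x \<psi>. creL M B (acoef B zeta mu x) True \<psi>) xs vac"

lemma pc_simps[simp]: "pc [] = vac" "pc (x # xs) = creL M B (acoef B zeta mu x) True (pc xs)"
  by (simp_all add: pc_def)

lemma suppd_pc: "suppd (length xs) 0 (pc xs)"
  by (induction xs) (simp_all add: suppd_vac suppd_CL_up)

lemma fin_supp_pc: "fin_supp (pc xs)"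
  using suppd_fin[OF suppd_pc] .

lemma CL_zero: "creL M B w \<sigma> (\<lambda>S. 0) = (\<lambda>S. 0)"
  using linop_zero[OF linop_creL] .
lemma AL_zero: "annL M B w \<sigma> (\<lambda>S. 0) = (\<lambda>S. 0)"
  using linop_zero[OF linop_annL] .

lemma b_kill_pc: assumes v: "v \<in> Osites B \<union> OBsites B" shows "set xs \<subseteq> M \<Longrightarrow> annL M B (bcoef mu v) True (pc xs) = (\<lambda>S. 0)"
proof (induction xs)
  case Nil then show ?case by (simp add: annL_vac)
next
  case (Cons x xs)
  then have x: "x \<in> M" and IH: "annL M B (bcoef mu v) True (pc xs) = (\<lambda>S. 0)" by auto
  show ?case
    by (rule ext, simp add: AL_CL[OF fin_supp_pc finL] IH ov_ab[OF v x] CL_zero)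
qed

lemma a_kill_pc: assumes y: "y \<in> M" shows "set xs \<subseteq> M \<Longrightarrow> y \<notin> set xs \<Longrightarrow> annL M B (acoef B zeta mu y) True (pc xs) = (\<lambda>S. 0)"
proof (induction xs)
  case Nil then show ?case by (simp add: annL_vac)
next
  case (Cons x xs)
  then have x: "x \<in> M" "x \<noteq> y" and IH: "annL M B (acoef B zeta mu y) True (pc xs) = (\<lambda>S. 0)" by auto
  show ?case
    by (rule ext, simp add: AL_CL[OF fin_supp_pc finL] IH ov_aa[OF x(1) y x(2)] CL_zero)
qed

definition ov :: "'a \<Rightarrow> complex" where "ov x = (\<Sum>z\<in>Lam M B. acoef B zeta mu x z * cnj (acoef B zeta mu x z))"

lemma a_hit_pc: assumes "x \<in> M" "set xs \<subseteq> M" "x \<notin> set xs"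
  shows "annL M B (acoef B zeta mu x) True (pc (x # xs)) S = ov x * pc xs S"
  using assms by (simp add: AL_CL[OF fin_supp_pc finL] a_kill_pc CL_zero ov_def)

lemma pc_nz: "distinct xs \<Longrightarrow> set xs \<subseteq> M \<Longrightarrow> pc xs \<noteq> (\<lambda>S. 0)"
proof (induction xs)
  case Nil then show ?case by (auto simp: vac_def fun_eq_iff)
next
  case (Cons x xs)
  then have x: "x \<in> M" "x \<notin> set xs" "set xs \<subseteq> M" and IH: "pc xs \<noteq> (\<lambda>S. 0)" by auto
  show ?case
  proof
    assume "pc (x # xs) = (\<lambda>S. 0)"
    then have "annL M B (acoef B zeta mu x) True (pc (x # xs)) = (\<lambda>S. 0)" by (simp add: AL_zero)
    then have "\<forall>S. ov x * pc xs S = 0" using a_hit_pc[OF x(1) x(3) x(2)] by metis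
    then have "pc xs = (\<lambda>S. 0)" using ov_pos[OF x(1)] by (auto simp: ov_def fun_eq_iff)
    then show False using IH by simp
  qed
qed

lemma C_kill_pc: "x \<in> set xs \<Longrightarrow> creL M B (acoef B zeta mu x) True (pc xs) = (\<lambda>S. 0)"
proof (induction xs)
  case Nil then show ?case by simp
next
  case (Cons x' xs)
  show ?case
  proof (cases "x = x'")
    case True then show ?thesis by (auto simp: CL_CL_same[OF fin_supp_pc] fun_eq_iff)
  next
    case False
    then have IH: "creL M B (acoef B zeta mu x) True (pc xs) = (\<lambda>S. 0)" using Cons by auto
    show ?thesis by (rule ext, simp add: CL_CL[OF fin_supp_pc, of _ _ _ _ "acoef B zeta mu x'"] IH CL_zero)
  qed
qed

lemma hop_pc: "distinct xs \<Longrightarrow> set xs \<subseteq> M \<Longrightarrow> x \<in> set xs \<Longrightarrow> y \<in> M \<Longrightarrow> x \<noteq> y \<Longrightarrow>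
   creL M B (acoef B zeta mu x) True (annL M B (acoef B zeta mu y) True (pc xs)) = (\<lambda>S. 0)"
proof (induction xs)
  case Nil then show ?case by simp
next
  case (Cons x1 xs)
  then have x1: "x1 \<in> M" "x1 \<notin> set xs" "set xs \<subseteq> M" "distinct xs" by auto
  show ?case
  proof (cases "y = x1")
    case True
    have ak: "annL M B (acoef B zeta mu y) True (pc xs) = (\<lambda>S. 0)" using a_kill_pc[OF Cons.prems(4) x1(3)] True x1(2) by simp
    have e: "annL M B (acoef B zeta mu y) True (pc (x1 # xs)) = (\<lambda>S. ov y * pc xs S)"
      by (rule ext) (simp add: AL_CL[OF fin_supp_pc finL] ak[unfolded True] True CL_zero ov_def)
    have "x \<in> set xs" using Cons.prems True by auto
    then show ?thesis unfolding e by (simp add: linop_cmult[OF linop_creL] C_kill_pc)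
  next
    case False
    have e: "annL M B (acoef B zeta mu y) True (pc (x1 # xs)) = (\<lambda>S. - creL M B (acoef B zeta mu x1) True (annL M B (acoef B zeta mu y) True (pc xs)) S)"
      using False by (intro ext) (simp add: AL_CL[OF fin_supp_pc finL] ov_aa[OF x1(1) Cons.prems(4)] eq_commute[of x1 y])
    show ?thesis
    proof (cases "x = x1")
      case True
      then show ?thesis unfolding e
        by (simp add: linop_uminus[OF linop_creL] CL_CL_same[OF fin_supp_annL[OF fin_supp_pc]])
    next
      case F2: False
      then have IH: "creL M B (acoef B zeta mu x) True (annL M B (acoef B zeta mu y) True (pc xs)) = (\<lambda>S. 0)"
        using Cons x1 by auto
      show ?thesis unfolding e
        by (rule ext, simp add: linop_uminus[OF linop_creL] CL_CL[OF fin_supp_annL[OF fin_supp_pc], of _ _ _ _ "acoef B zeta mu x1"] IH CL_zero)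
    qed
  qed
qed

end

lemma UNIV_bool_sum: "(\<Sum>\<sigma>\<in>(UNIV::bool set). f \<sigma>) = f True + f False"
  by (simp add: UNIV_bool add.commute)

context hub begin

lemma Sm_zero: "Stot M B Sminus (\<lambda>S. 0) = (\<lambda>S. 0)"
  using linop_zero[OF linop_Stot[OF linop_Sminus]] .
lemma Sp_zero: "Stot M B Splus (\<lambda>S. 0) = (\<lambda>S. 0)"
  using linop_zero[OF linop_Stot[OF linop_Splus]] .

lemma ann_down_zero: assumes "suppd n 0 \<psi>" shows "ann (z,False) \<psi> = (\<lambda>S. 0)"
proof (rule ext)
  fix S
  show "ann (z,False) \<psi> S = 0"
  proof (cases "\<psi> (insert (z,False) S) = 0")
    case False
    then have p: "insert (z,False) S \<subseteq> modes M B" "ndn (insert (z,False) S) = 0" using assms[unfolded suppd_def, rule_format, OF False] by auto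
    have fin2: "finite {m \<in> insert (z,False) S. \<not> snd m}" by (rule finite_subset[OF _ finMd]) (use p(1) in auto)
    have "(z,False) \<in> {m \<in> insert (z,False) S. \<not> snd m}" by simp
    then have "card {m \<in> insert (z,False) S. \<not> snd m} > 0" using fin2 card_gt_0_iff by blast
    then show ?thesis using p(2) unfolding ndn_def by linarith
  qed (simp add: ann_def)
qed

lemma AL_down_zero: "suppd n 0 \<psi> \<Longrightarrow> annL M B w False \<psi> = (\<lambda>S. 0)"
  by (simp add: annL_def ann_down_zero)

lemma Sp_down_zero: "suppd n 0 \<psi> \<Longrightarrow> Stot M B Splus \<psi> = (\<lambda>S. 0)"
  by (simp add: Stot_def Splus_def ann_down_zero)

lemma nodbl_down: assumes "suppd n 0 \<psi>" shows "nodbl \<psi>"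
  unfolding nodbl_def
proof (intro allI impI)
  fix S :: "'a mode set" and z assume zz: "(z,True) \<in> S \<and> (z,False) \<in> S"
  show "\<psi> S = 0"
  proof (rule ccontr)
    assume "\<psi> S \<noteq> 0"
    then have p: "S \<subseteq> modes M B" "ndn S = 0" using assms[unfolded suppd_def, rule_format] by auto
    have fin2: "finite {m \<in> S. \<not> snd m}" by (rule finite_subset[OF _ finMd]) (use p(1) in auto)
    have "(z,False) \<in> {m \<in> S. \<not> snd m}" using zz by simp
    then have "card {m \<in> S. \<not> snd m} > 0" using fin2 card_gt_0_iff by blast
    then show False using p(2) unfolding ndn_def by linarith
  qed
qed

definition xs0 :: "'a list" where "xs0 = sorted_list_of_set M"
lemma xs0: "distinct xs0" "set xs0 = M" "length xs0 = card M"
  using finM by (simp_all add: xs0_def)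

definition psi :: "nat \<Rightarrow> 'a vec" where "psi k = (Stot M B Sminus ^^ k) (pc xs0)"

lemma psi_0: "psi 0 = pc xs0" by (simp add: psi_def)
lemma psi_Suc: "psi (Suc k) = Stot M B Sminus (psi k)" by (simp add: psi_def)

lemma suppd_psi: "suppd (card M) k (psi k)"
  by (induction k) (simp_all add: psi_0 psi_Suc suppd_Sm flip: xs0(3) add: suppd_pc)

lemma fin_psi: "fin_supp (psi k)" using suppd_fin[OF suppd_psi] .

lemma nodbl_psi: "nodbl (psi k)"
  by (induction k) (simp_all add: psi_0 psi_Suc nodbl_Sm nodbl_down[OF suppd_pc])

lemma Sp_psi: "Stot M B Splus (psi (Suc k)) = (\<lambda>S. of_nat (Suc k) * (of_nat (card M) - of_nat k) * psi k S)"
proof (induction k)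
  case 0
  show ?case
  proof
    fix S
    have "Stot M B Splus (psi (Suc 0)) S = Stot M B Sminus (Stot M B Splus (psi 0)) S + 2 * Stot M B S3 (psi 0) S"
      unfolding psi_Suc by (rule Sp_Sm[OF fin_psi finL])
    also have "\<dots> = of_nat (card M) * psi 0 S"
      using Sp_down_zero[OF suppd_pc] Sz_suppd[OF suppd_psi, of 0 S]
      by (simp add: psi_0 Sm_zero mult.commute[of 2])
    finally show "Stot M B Splus (psi (Suc 0)) S = of_nat (Suc 0) * (of_nat (card M) - of_nat 0) * psi 0 S" by simp
  qed
next
  case (Suc k)
  show ?case
  proof
    fix S
    have "Stot M B Splus (psi (Suc (Suc k))) S = Stot M B Sminus (Stot M B Splus (psi (Suc k))) S + 2 * Stot M B S3 (psi (Suc k)) S"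
      unfolding psi_Suc[of "Suc k"] by (rule Sp_Sm[OF fin_psi finL])
    also have "\<dots> = of_nat (Suc k) * (of_nat (card M) - of_nat k) * psi (Suc k) S + 2 * ((of_nat (card M) / 2 - of_nat (Suc k)) * psi (Suc k) S)"
      unfolding Suc.IH Sz_suppd[OF suppd_psi]
      by (simp add: linop_cmult[OF linop_Stot[OF linop_Sminus]] psi_Suc)
    also have "\<dots> = of_nat (Suc (Suc k)) * (of_nat (card M) - of_nat (Suc k)) * psi (Suc k) S"
      by (simp add: algebra_simps)
    finally show "Stot M B Splus (psi (Suc (Suc k))) S = of_nat (Suc (Suc k)) * (of_nat (card M) - of_nat (Suc k)) * psi (Suc k) S" .
  qed
qed

lemma psi_nz: "k \<le> card M \<Longrightarrow> psi k \<noteq> (\<lambda>S. 0)"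
proof (induction k)
  case 0 then show ?case using pc_nz[OF xs0(1)] xs0(2) by (simp add: psi_0)
next
  case (Suc k)
  show ?case
  proof
    assume "psi (Suc k) = (\<lambda>S. 0)"
    then have "Stot M B Splus (psi (Suc k)) = (\<lambda>S. 0)" by (simp add: Sp_zero)
    then have "\<forall>S. of_nat (Suc k) * (of_nat (card M) - of_nat k) * psi k S = (0::complex)" unfolding Sp_psi by metis
    moreover have "(of_nat (card M) - of_nat k :: complex) \<noteq> 0" using Suc.prems by simp
    moreover have "(of_nat (Suc k)::complex) \<noteq> 0" using of_nat_neq_0 by blast
    ultimately have "psi k = (\<lambda>S. 0)" by (auto simp: fun_eq_iff simp del: of_nat_Suc)
    then show False using Suc by simp
  qed
qed

end

context hub begin

lemmas Sm_lin = linop_add[OF linop_Stot[OF linop_Sminus]] linop_diff[OF linop_Stot[OF linop_Sminus]]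
  linop_divide[OF linop_Stot[OF linop_Sminus]] linop_cmult[OF linop_Stot[OF linop_Sminus]]
  linop_sum[OF linop_Stot[OF linop_Sminus]] linop_zero[OF linop_Stot[OF linop_Sminus]]
lemmas Sp_lin = linop_add[OF linop_Stot[OF linop_Splus]] linop_diff[OF linop_Stot[OF linop_Splus]]
  linop_divide[OF linop_Stot[OF linop_Splus]] linop_cmult[OF linop_Stot[OF linop_Splus]]
lemmas Sz_lin = linop_add[OF linop_Stot[OF linop_S3]] linop_cmult[OF linop_Stot[OF linop_S3]]
lemmas CL_lin = linop_add[OF linop_creL] linop_diff[OF linop_creL] linop_cmult[OF linop_creL] linop_zero[OF linop_creL]

definition hop :: "'a vec \<Rightarrow> 'a vec" where
  "hop \<psi> = (\<lambda>S. \<Sum>e\<in>Edg B. \<Sum>\<sigma>\<in>(UNIV::bool set).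
      creL M B (acoef B zeta mu (fst e)) \<sigma> (annL M B (acoef B zeta mu (snd e)) \<sigma> \<psi>) S)"

lemma pair_comm: assumes f: "fin_supp \<psi>"
  shows "(\<Sum>\<sigma>\<in>(UNIV::bool set). Stot M B Sminus (creL M B w \<sigma> (annL M B w' \<sigma> \<psi>)) S)
       = (\<Sum>\<sigma>\<in>(UNIV::bool set). creL M B w \<sigma> (annL M B w' \<sigma> (Stot M B Sminus \<psi>)) S)"
proof -
  have A1: "Stot M B Sminus (annL M B w' True \<psi>) = annL M B w' True (Stot M B Sminus \<psi>)"
    by (rule ext) (simp add: Sm_AL[OF f finL])
  have A2: "Stot M B Sminus (annL M B w' False \<psi>) = (\<lambda>S. annL M B w' False (Stot M B Sminus \<psi>) S - annL M B w' True \<psi> S)"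
    by (rule ext) (simp add: Sm_AL[OF f finL])
  have "Stot M B Sminus (creL M B w True (annL M B w' True \<psi>)) S
     = creL M B w False (annL M B w' True \<psi>) S + creL M B w True (annL M B w' True (Stot M B Sminus \<psi>)) S"
    using Sm_CL[OF fin_supp_annL[OF f, where w=w' and \<sigma>=True] finL, where w=w and \<sigma>=True and S=S] by (simp add: A1)
  moreover have "Stot M B Sminus (creL M B w False (annL M B w' False \<psi>)) S
     = creL M B w False (annL M B w' False (Stot M B Sminus \<psi>)) S - creL M B w False (annL M B w' True \<psi>) S"
    using Sm_CL[OF fin_supp_annL[OF f, where w=w' and \<sigma>=False] finL, where w=w and \<sigma>=False and S=S] by (simp add: A2 CL_lin)
  ultimately show ?thesis by (simp add: UNIV_bool_sum)
qed

lemma hop_Sm: assumes f: "fin_supp \<psi>" shows "hop (Stot M B Sminus \<psi>) = Stot M B Sminus (hop \<psi>)"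
  unfolding hop_def by (rule ext) (simp add: Sm_lin pair_comm[OF f])

lemma Edg_props: "e \<in> Edg B \<Longrightarrow> fst e \<in> M \<and> snd e \<in> M \<and> fst e \<noteq> snd e"
  using Bsub irr by (auto simp: Edg_def)

lemma hop_psi0: "hop (psi 0) = (\<lambda>S. 0)"
proof -
  have "creL M B (acoef B zeta mu (fst e)) \<sigma> (annL M B (acoef B zeta mu (snd e)) \<sigma> (psi 0)) = (\<lambda>S. 0)"
    if e: "e \<in> Edg B" for e \<sigma>
  proof (cases \<sigma>)
    case True
    then show ?thesis unfolding psi_0 using hop_pc[OF xs0(1)] xs0(2) Edg_props[OF e] by simp
  next
    case False
    then show ?thesis unfolding psi_0 using AL_down_zero[OF suppd_pc] by (simp add: CL_lin)
  qed
  then show ?thesis unfolding hop_def by simp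
qed

lemma hop_psi: "hop (psi k) = (\<lambda>S. 0)"
  by (induction k) (simp_all add: hop_psi0 psi_Suc hop_Sm[OF fin_psi] Sm_lin)

lemma eB_psi: assumes v: "v \<in> Osites B \<union> OBsites B"
  shows "\<forall>\<sigma>. annL M B (bcoef mu v) \<sigma> (psi k) = (\<lambda>S. 0)"
proof (induction k)
  case 0
  show ?case
  proof
    fix \<sigma> show "annL M B (bcoef mu v) \<sigma> (psi 0) = (\<lambda>S. 0)"
      using b_kill_pc[OF v] xs0(2) AL_down_zero[OF suppd_pc] unfolding psi_0 by (cases \<sigma>) auto
  qed
next
  case (Suc k)
  show ?case
  proof
    fix \<sigma> show "annL M B (bcoef mu v) \<sigma> (psi (Suc k)) = (\<lambda>S. 0)"
    proof
      fix S
      show "annL M B (bcoef mu v) \<sigma> (psi (Suc k)) S = 0"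
        using Sm_AL[OF fin_psi[of k] finL, where w="bcoef mu v" and \<sigma>=\<sigma> and S=S] Suc.IH unfolding psi_Suc
        by (simp add: Sm_lin)
    qed
  qed
qed

lemma S1tot: "Stot M B S1 \<psi> = (\<lambda>S. (Stot M B Splus \<psi> S + Stot M B Sminus \<psi> S) / 2)"
  by (rule ext) (simp only: Stot_def S1_def sum_divide_distrib[symmetric] sum.distrib)
lemma S2tot: "Stot M B S2 \<psi> = (\<lambda>S. (Stot M B Splus \<psi> S - Stot M B Sminus \<psi> S) / (2 * \<i>))"
  by (rule ext) (simp only: Stot_def S2_def sum_divide_distrib[symmetric] sum_subtractf)

lemma Ssq: "Stot_sq M B \<psi> S = (Stot M B Splus (Stot M B Sminus \<psi>) S + Stot M B Sminus (Stot M B Splus \<psi>) S) / 2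
    + Stot M B S3 (Stot M B S3 \<psi>) S"
  unfolding Stot_sq_def S1tot S2tot by (simp add: Sp_lin Sm_lin field_simps)

lemma Ssq_psi: "Stot_sq M B (psi k) = (\<lambda>S. complex_of_real ((real (card M) / 2) * (real (card M) / 2 + 1)) * psi k S)"
proof
  fix S
  have a: "Stot M B Splus (Stot M B Sminus (psi k)) S = of_nat (Suc k) * (of_nat (card M) - of_nat k) * psi k S"
    by (simp add: psi_Suc[symmetric] Sp_psi)
  have b: "Stot M B Sminus (Stot M B Splus (psi k)) S = of_nat k * (of_nat (card M) - of_nat k + 1) * psi k S"
  proof (cases k)
    case 0 then show ?thesis by (simp add: psi_0 Sp_down_zero[OF suppd_pc] Sm_lin)
  next
    case (Suc j)
    then show ?thesis by (simp add: Sp_psi Sm_lin psi_Suc[symmetric] algebra_simps)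
  qed
  have sz: "Stot M B S3 (psi k) = (\<lambda>S. (of_nat (card M) / 2 - of_nat k) * psi k S)"
    by (rule ext) (rule Sz_suppd[OF suppd_psi])
  have c: "Stot M B S3 (Stot M B S3 (psi k)) S = (of_nat (card M) / 2 - of_nat k)^2 * psi k S"
    unfolding sz by (simp add: Sz_lin sz power2_eq_square)
  show "Stot_sq M B (psi k) S = complex_of_real ((real (card M) / 2) * (real (card M) / 2 + 1)) * psi k S"
    unfolding Ssq a b c by (simp add: field_simps power2_eq_square)
qed

end

lemma affine_lim: assumes "((\<lambda>x::real. a + x * b) \<longlongrightarrow> L) at_top" shows "b = 0 \<and> L = a"
proof -
  have b: "b = 0"
  proof (rule ccontr)
    assume nb: "b \<noteq> 0"
    have "((\<lambda>x::real. ((a + x * b) - a) / b) \<longlongrightarrow> (L - a) / b) at_top"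
      by (intro tendsto_intros assms nb)
    moreover have "(\<lambda>x::real. ((a + x * b) - a) / b) = (\<lambda>x. x)" using nb by (auto simp: fun_eq_iff)
    ultimately have "((\<lambda>x::real. x) \<longlongrightarrow> (L - a) / b) at_top" by simp
    moreover have "filterlim (\<lambda>x::real. x) at_infinity at_top"
      by (rule filterlim_at_top_imp_at_infinity) (rule filterlim_ident)
    ultimately show False using not_tendsto_and_filterlim_at_infinity[of "at_top::real filter"] by auto
  qed
  then have "((\<lambda>x::real. a) \<longlongrightarrow> L) at_top" using assms by simp
  then have "L = a" by (metis tendsto_const_iff trivial_limit_at_top_linorder)
  with b show ?thesis by simp
qed

lemma inner_cre: assumes m: "m \<in> modes M B" and fm: "finite (modes M B)"
  shows "inner_F M B \<phi> (cre m \<chi>) = inner_F M B (ann m \<phi>) \<chi>"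
proof -
  let ?P = "Pow (modes M B)"
  have fP: "finite ?P" using fm by simp
  have "inner_F M B \<phi> (cre m \<chi>) = (\<Sum>S\<in>?P. if m \<in> S then cnj (\<phi> S) * (fsign (S - {m}) m * \<chi> (S - {m})) else 0)"
    unfolding inner_F_def cre_def by (intro sum.cong refl) auto
  also have "\<dots> = (\<Sum>S\<in>{S\<in>?P. m \<in> S}. cnj (\<phi> S) * (fsign (S - {m}) m * \<chi> (S - {m})))"
    by (rule sum.inter_filter[OF fP, symmetric])
  also have "\<dots> = (\<Sum>T\<in>{T\<in>?P. m \<notin> T}. cnj (\<phi> (insert m T)) * (fsign (insert m T - {m}) m * \<chi> (insert m T - {m})))"
  proof (rule sum.reindex_bij_betw[symmetric])
    show "bij_betw (insert m) {T\<in>?P. m \<notin> T} {S\<in>?P. m \<in> S}"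
      by (rule bij_betw_byWitness[where f'="\<lambda>S. S - {m}"]) (use m in auto)
  qed
  also have "\<dots> = (\<Sum>T\<in>{T\<in>?P. m \<notin> T}. cnj (\<phi> (insert m T)) * (fsign T m * \<chi> T))"
    by (intro sum.cong refl) auto
  also have "\<dots> = (\<Sum>T\<in>?P. if m \<notin> T then cnj (\<phi> (insert m T)) * (fsign T m * \<chi> T) else 0)"
    by (rule sum.inter_filter[OF fP])
  also have "\<dots> = inner_F M B (ann m \<phi>) \<chi>"
    unfolding inner_F_def ann_def by (intro sum.cong refl) auto
  finally show ?thesis .
qed

lemma inner_sum: "inner_F M B \<phi> (\<lambda>S. \<Sum>i\<in>I. f i S) = (\<Sum>i\<in>I. inner_F M B \<phi> (f i))"
  unfolding inner_F_def by (simp add: sum_distrib_left) (rule sum.swap)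
lemma inner_cmult: "inner_F M B \<phi> (\<lambda>S. c * f S) = c * inner_F M B \<phi> f"
  unfolding inner_F_def by (simp add: sum_distrib_left mult.left_commute)
lemma inner_add: "inner_F M B \<phi> (\<lambda>S. f S + g S) = inner_F M B \<phi> f + inner_F M B \<phi> g"
  unfolding inner_F_def by (simp add: distrib_left sum.distrib)
lemma inner_sum_left: "inner_F M B (\<lambda>S. \<Sum>i\<in>I. c i * f i S) \<chi> = (\<Sum>i\<in>I. cnj (c i) * inner_F M B (f i) \<chi>)"
  unfolding inner_F_def by (simp add: sum_distrib_left sum_distrib_right mult.assoc) (rule sum.swap)

lemma inner_creL: assumes "finite (modes M B)"
  shows "inner_F M B \<phi> (creL M B w \<sigma> \<chi>) = inner_F M B (annL M B w \<sigma> \<phi>) \<chi>"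
proof -
  have "inner_F M B \<phi> (creL M B w \<sigma> \<chi>) = (\<Sum>z\<in>Lam M B. cnj (w z) * inner_F M B \<phi> (cre (z,\<sigma>) \<chi>))"
    unfolding creL_def by (simp add: inner_sum inner_cmult)
  also have "\<dots> = (\<Sum>z\<in>Lam M B. cnj (w z) * inner_F M B (ann (z,\<sigma>) \<phi>) \<chi>)"
    using inner_cre[OF _ assms] by (simp add: modes_def)
  also have "\<dots> = inner_F M B (annL M B w \<sigma> \<phi>) \<chi>"
    unfolding annL_def by (simp add: inner_sum_left)
  finally show ?thesis .
qed

lemma inner_self: "inner_F M B \<phi> \<phi> = complex_of_real (\<Sum>S\<in>Pow (modes M B). (cmod (\<phi> S))\<^sup>2)"
  unfolding inner_F_def by (simp add: complex_norm_square mult.commute del: of_real_power)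


context hub begin

definition nsq :: "'a vec \<Rightarrow> real" where "nsq f = (\<Sum>S\<in>Pow (modes M B). (cmod (f S))\<^sup>2)"
definition eT :: "'a vec \<Rightarrow> real" where "eT \<Phi> = Re (inner_F M B \<Phi> (hop \<Phi>))"
definition eB :: "'a vec \<Rightarrow> real" where
  "eB \<Phi> = (\<Sum>v\<in>Osites B \<union> OBsites B. \<Sum>\<sigma>\<in>(UNIV::bool set). nsq (annL M B (bcoef mu v) \<sigma> \<Phi>))"
definition eD :: "'a vec \<Rightarrow> real" where
  "eD \<Phi> = (\<Sum>z\<in>Lam M B. \<Sum>S\<in>Pow (modes M B). if (z,True) \<in> S \<and> (z,False) \<in> S then (cmod (\<Phi> S))\<^sup>2 else 0)"

lemma energy_eq: "energy M B zeta mu t s U \<Phi> = t * eT \<Phi> + s * eB \<Phi> + U * eD \<Phi>"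
proof -
  have h: "ham M B zeta mu t s U \<Phi> = (\<lambda>S. complex_of_real t * hop \<Phi> S
      + complex_of_real s * (\<Sum>v\<in>Osites B \<union> OBsites B. \<Sum>\<sigma>\<in>(UNIV::bool set).
          creL M B (bcoef mu v) \<sigma> (annL M B (bcoef mu v) \<sigma> \<Phi>) S)
      + complex_of_real U * (\<Sum>z\<in>Lam M B. nop (z, True) (nop (z, False) \<Phi>) S))"
    unfolding ham_def hop_def by (simp add: case_prod_beta)
  have i2: "inner_F M B \<Phi> (creL M B (bcoef mu v) \<sigma> (annL M B (bcoef mu v) \<sigma> \<Phi>)) = complex_of_real (nsq (annL M B (bcoef mu v) \<sigma> \<Phi>))" for v \<sigma>
    by (simp add: inner_creL[OF finMd] inner_self nsq_def)
  have i3: "inner_F M B \<Phi> (nop (z, True) (nop (z, False) \<Phi>)) = complex_of_real (\<Sum>S\<in>Pow (modes M B). if (z,True) \<in> S \<and> (z,False) \<in> S then (cmod (\<Phi> S))\<^sup>2 else 0)" for z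
    unfolding inner_F_def nop_eq of_real_sum
    by (intro sum.cong refl) (auto simp: complex_norm_square mult.commute simp del: of_real_power)
  have "inner_F M B \<Phi> (ham M B zeta mu t s U \<Phi>) = complex_of_real t * inner_F M B \<Phi> (hop \<Phi>)
     + complex_of_real s * complex_of_real (eB \<Phi>) + complex_of_real U * complex_of_real (eD \<Phi>)"
    unfolding h inner_add inner_cmult inner_sum i2 i3 eB_def eD_def of_real_sum by simp
  then show ?thesis unfolding energy_def eT_def by simp
qed

lemma nsq_nonneg: "nsq f \<ge> 0" unfolding nsq_def by (simp add: sum_nonneg)
lemma eB_nonneg: "eB \<Phi> \<ge> 0" unfolding eB_def by (simp add: sum_nonneg nsq_nonneg)
lemma eD_nonneg: "eD \<Phi> \<ge> 0" unfolding eD_def by (simp add: sum_nonneg)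

lemma lim_iff: "lim_energy_is M B zeta mu t \<Phi> E \<longleftrightarrow> eD \<Phi> = 0 \<and> eB \<Phi> = 0 \<and> E = t * eT \<Phi>"
proof
  assume "lim_energy_is M B zeta mu t \<Phi> E"
  then obtain g where ev: "\<forall>\<^sub>F s in at_top. ((\<lambda>U. energy M B zeta mu t s U \<Phi>) \<longlongrightarrow> g s) at_top"
    and gl: "(g \<longlongrightarrow> E) at_top" unfolding lim_energy_is_def by blast
  have ev2: "\<forall>\<^sub>F s in at_top. ((\<lambda>U. (t * eT \<Phi> + s * eB \<Phi>) + U * eD \<Phi>) \<longlongrightarrow> g s) at_top"
    using ev by (simp add: energy_eq)
  have gs: "g s = t * eT \<Phi> + s * eB \<Phi>" if "((\<lambda>U. (t * eT \<Phi> + s * eB \<Phi>) + U * eD \<Phi>) \<longlongrightarrow> g s) at_top" for s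
    using affine_lim[OF that] by simp
  have gD: "eD \<Phi> = 0" if "((\<lambda>U. (t * eT \<Phi> + s * eB \<Phi>) + U * eD \<Phi>) \<longlongrightarrow> g s) at_top" for s
    using affine_lim[OF that] by simp
  from ev2[unfolded eventually_at_top_linorder] obtain N0 where
    N0: "\<And>s. s \<ge> N0 \<Longrightarrow> ((\<lambda>U. (t * eT \<Phi> + s * eB \<Phi>) + U * eD \<Phi>) \<longlongrightarrow> g s) at_top" by blast
  have D: "eD \<Phi> = 0" using gD[OF N0[of N0]] by simp
  have evg: "\<forall>\<^sub>F s in at_top. t * eT \<Phi> + s * eB \<Phi> = g s"
    unfolding eventually_at_top_linorder using gs N0 by (metis)
  have "((\<lambda>s. t * eT \<Phi> + s * eB \<Phi>) \<longlongrightarrow> E) at_top \<longleftrightarrow> (g \<longlongrightarrow> E) at_top"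
    by (rule tendsto_cong[OF evg])
  then have "((\<lambda>s. t * eT \<Phi> + s * eB \<Phi>) \<longlongrightarrow> E) at_top" using gl by simp
  then have "eB \<Phi> = 0 \<and> E = t * eT \<Phi>" using affine_lim[of "t * eT \<Phi>" "eB \<Phi>" E] by simp
  with D show "eD \<Phi> = 0 \<and> eB \<Phi> = 0 \<and> E = t * eT \<Phi>" by simp
next
  assume a: "eD \<Phi> = 0 \<and> eB \<Phi> = 0 \<and> E = t * eT \<Phi>"
  show "lim_energy_is M B zeta mu t \<Phi> E"
    unfolding lim_energy_is_def
    by (rule exI[where x="\<lambda>s. t * eT \<Phi>"]) (use a in \<open>simp add: energy_eq\<close>)
qed

lemma fin_iff: "finite_energy M B zeta mu t \<Phi> \<longleftrightarrow> eD \<Phi> = 0 \<and> eB \<Phi> = 0"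
  unfolding finite_energy_def lim_iff by auto

lemma lim_val: "finite_energy M B zeta mu t \<Phi> \<Longrightarrow> lim_energy M B zeta mu t \<Phi> = t * eT \<Phi>"
  unfolding lim_energy_def fin_iff by (rule the_equality) (simp_all add: lim_iff)

definition condD :: "'a vec \<Rightarrow> bool" where
  "condD \<Phi> \<longleftrightarrow> (\<forall>S z. S \<subseteq> modes M B \<longrightarrow> z \<in> Lam M B \<longrightarrow> (z,True) \<in> S \<longrightarrow> (z,False) \<in> S \<longrightarrow> \<Phi> S = 0)"
definition condB :: "'a vec \<Rightarrow> bool" where
  "condB \<Phi> \<longleftrightarrow> (\<forall>v \<sigma> S. v \<in> Osites B \<union> OBsites B \<longrightarrow> S \<subseteq> modes M B \<longrightarrow> annL M B (bcoef mu v) \<sigma> \<Phi> S = 0)"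

lemma finO: "finite (Osites B \<union> OBsites B)" using finB by (simp add: Osites_def OBsites_def)

lemma eD_iff: "eD \<Phi> = 0 \<longleftrightarrow> condD \<Phi>"
proof -
  have fP: "finite (Pow (modes M B))" using finMd by simp
  have "eD \<Phi> = 0 \<longleftrightarrow> (\<forall>z\<in>Lam M B. \<forall>S\<in>Pow (modes M B). (if (z,True) \<in> S \<and> (z,False) \<in> S then (cmod (\<Phi> S))\<^sup>2 else 0) = 0)"
    unfolding eD_def using finL fP
    by (simp add: sum_nonneg_eq_0_iff sum_nonneg)
  also have "\<dots> \<longleftrightarrow> condD \<Phi>" unfolding condD_def by auto
  finally show ?thesis .
qed

lemma nsq_iff: "nsq f = 0 \<longleftrightarrow> (\<forall>S. S \<subseteq> modes M B \<longrightarrow> f S = 0)"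
  unfolding nsq_def using finMd by (simp add: sum_nonneg_eq_0_iff) blast

lemma eB_iff: "eB \<Phi> = 0 \<longleftrightarrow> condB \<Phi>"
proof -
  have "eB \<Phi> = 0 \<longleftrightarrow> (\<forall>v\<in>Osites B \<union> OBsites B. \<forall>\<sigma>\<in>(UNIV::bool set). nsq (annL M B (bcoef mu v) \<sigma> \<Phi>) = 0)"
    unfolding eB_def using finO by (simp add: sum_nonneg_eq_0_iff sum_nonneg nsq_nonneg)
  also have "\<dots> \<longleftrightarrow> condB \<Phi>" unfolding condB_def nsq_iff by auto
  finally show ?thesis .
qed

lemma fin_iff2: "finite_energy M B zeta mu t \<Phi> \<longleftrightarrow> condD \<Phi> \<and> condB \<Phi>"
  unfolding fin_iff eD_iff eB_iff ..

end

context hub begin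

definition conf :: "('a \<Rightarrow> bool) \<Rightarrow> 'a mode set" where
  "conf \<sigma> = (\<lambda>x. (MS x, \<sigma> x)) ` M"

lemma conf_modes: "conf \<sigma> \<subseteq> modes M B"
  by (auto simp: conf_def modes_def Lam_def)

lemma conf_card: "card (conf \<sigma>) = card M"
  unfolding conf_def by (rule card_image) (auto simp: inj_on_def)

lemma conf_ndn: "ndn (conf \<sigma>) = card {x\<in>M. \<not> \<sigma> x}"
proof -
  have "{m \<in> conf \<sigma>. \<not> snd m} = (\<lambda>x. (MS x, \<sigma> x)) ` {x\<in>M. \<not> \<sigma> x}" by (auto simp: conf_def)
  then show ?thesis unfolding ndn_def by (simp add: card_image inj_on_def)
qed

lemma conf_cong: "(\<And>x. x \<in> M \<Longrightarrow> \<sigma> x = \<tau> x) \<Longrightarrow> conf \<sigma> = conf \<tau>"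
  unfolding conf_def by (rule image_cong) auto

lemma annL_OS: assumes "(x,y) \<in> B"
  shows "annL M B (bcoef mu (OS x y)) \<rho> \<Phi> S = ann (OS x y,\<rho>) \<Phi> S - mu * ann (MS x,\<rho>) \<Phi> S - mu * ann (MS y,\<rho>) \<Phi> S"
proof -
  have K: "{OS x y, MS x, MS y} \<subseteq> Lam M B" using assms B_M OS_Lam MS_Lam by auto
  have "annL M B (bcoef mu (OS x y)) \<rho> \<Phi> S = (\<Sum>z\<in>{OS x y, MS x, MS y}. bcoef mu (OS x y) z * ann (z,\<rho>) \<Phi> S)"
    unfolding annL_def by (rule sum_Lam_restrict[OF K]) (auto simp: bcoef_def split: site.splits)
  also have "\<dots> = ann (OS x y,\<rho>) \<Phi> S - mu * ann (MS x,\<rho>) \<Phi> S - mu * ann (MS y,\<rho>) \<Phi> S"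
    using B_neq[OF assms] by (simp add: bcoef_def)
  finally show ?thesis .
qed

lemma annL_OB: assumes "(x,y) \<in> B"
  shows "annL M B (bcoef mu (OB x y)) \<rho> \<Phi> S = ann (OB x y,\<rho>) \<Phi> S + mu * ann (MS x,\<rho>) \<Phi> S - mu * ann (MS y,\<rho>) \<Phi> S"
proof -
  have K: "{OB x y, MS x, MS y} \<subseteq> Lam M B" using assms B_M OB_Lam MS_Lam by auto
  have "annL M B (bcoef mu (OB x y)) \<rho> \<Phi> S = (\<Sum>z\<in>{OB x y, MS x, MS y}. bcoef mu (OB x y) z * ann (z,\<rho>) \<Phi> S)"
    unfolding annL_def by (rule sum_Lam_restrict[OF K]) (auto simp: bcoef_def split: site.splits)
  also have "\<dots> = ann (OB x y,\<rho>) \<Phi> S + mu * ann (MS x,\<rho>) \<Phi> S - mu * ann (MS y,\<rho>) \<Phi> S"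
    using B_neq[OF assms] by (simp add: bcoef_def)
  finally show ?thesis .
qed

definition Wp :: "'a vec \<Rightarrow> bool" where
  "Wp \<Phi> \<longleftrightarrow> Ne_space M B (card M) \<Phi> \<and> condD \<Phi> \<and> condB \<Phi>"

lemma relOS: assumes W: "condB \<Phi>" and xy: "(x,y) \<in> B" and S0: "S0 \<subseteq> modes M B" and nin: "(OS x y, \<rho>) \<notin> S0"
  shows "fsign S0 (OS x y, \<rho>) * \<Phi> (insert (OS x y, \<rho>) S0) = mu * (ann (MS x,\<rho>) \<Phi> S0 + ann (MS y,\<rho>) \<Phi> S0)"
proof -
  have vO: "OS x y \<in> Osites B \<union> OBsites B" using xy by (force simp: Osites_def)
  have "annL M B (bcoef mu (OS x y)) \<rho> \<Phi> S0 = 0"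
    using condB_def[THEN iffD1, OF W, rule_format, OF vO S0] .
  then show ?thesis unfolding annL_OS[OF xy] using nin by (simp add: ann_def algebra_simps)
qed

lemma relOB: assumes W: "condB \<Phi>" and xy: "(x,y) \<in> B" and S0: "S0 \<subseteq> modes M B" and nin: "(OB x y, \<rho>) \<notin> S0"
  shows "fsign S0 (OB x y, \<rho>) * \<Phi> (insert (OB x y, \<rho>) S0) = mu * (ann (MS y,\<rho>) \<Phi> S0 - ann (MS x,\<rho>) \<Phi> S0)"
proof -
  have vO: "OB x y \<in> Osites B \<union> OBsites B" using xy by (force simp: OBsites_def)
  have "annL M B (bcoef mu (OB x y)) \<rho> \<Phi> S0 = 0"
    using condB_def[THEN iffD1, OF W, rule_format, OF vO S0] .
  then show ?thesis unfolding annL_OB[OF xy] using nin by (simp add: ann_def algebra_simps)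
qed

lemma dbl: assumes "condD \<Phi>" "S \<subseteq> modes M B" "z \<in> Lam M B" "(z,a) \<in> S" "(z,b) \<in> S" "a \<noteq> b"
  shows "\<Phi> S = 0"
  using assms unfolding condD_def by (cases a) auto

lemma modes_iff[simp]: "(z,b) \<in> modes M B \<longleftrightarrow> z \<in> Lam M B" by (simp add: modes_def)

definition isb :: "'a site \<Rightarrow> bool" where "isb z = (case z of MS _ \<Rightarrow> False | _ \<Rightarrow> True)"
definition bc :: "'a mode set \<Rightarrow> nat" where "bc S = card {m\<in>S. isb (fst m)}"

lemma MS_Lam_iff: "MS x \<in> Lam M B \<longleftrightarrow> x \<in> M"
  by (auto simp: Lam_def Osites_def OBsites_def)

lemma uniq: assumes W: "Wp \<Phi>" and Z: "\<forall>\<sigma>. \<Phi> (conf \<sigma>) = 0" shows "\<Phi> = (\<lambda>S. 0)"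
proof -
  have Ne: "Ne_space M B (card M) \<Phi>" and D: "condD \<Phi>" and Bc: "condB \<Phi>" using W by (auto simp: Wp_def)
  have main: "\<forall>S. bc S = n \<longrightarrow> S \<subseteq> modes M B \<longrightarrow> \<Phi> S = 0" for n
  proof (induction n)
    case 0
    show ?case
    proof (intro allI impI)
      fix S assume b: "bc S = 0" and Sm: "S \<subseteq> modes M B"
      have fS: "finite S" using Sm finMd finite_subset by blast
      have noB: "\<not> isb (fst m)" if "m \<in> S" for m
      proof
        assume "isb (fst m)"
        then have "m \<in> {m\<in>S. isb (fst m)}" using that by simp
        moreover have "finite {m\<in>S. isb (fst m)}" using fS by simp
        ultimately have "bc S > 0" unfolding bc_def using card_gt_0_iff by blast
        then show False using b by simp
      qed
      show "\<Phi> S = 0"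
      proof (rule ccontr)
        assume nz: "\<Phi> S \<noteq> 0"
        have cS: "card S = card M" using Ne nz unfolding Ne_space_def by blast
        define \<sigma> where "\<sigma> x = ((MS x,True) \<in> S)" for x
        have "S \<subseteq> conf \<sigma>"
        proof
          fix m assume mS: "m \<in> S"
          obtain z b where m: "m = (z,b)" by (cases m)
          have zL: "z \<in> Lam M B" using Sm mS m by auto
          from noB[OF mS] m obtain x where z: "z = MS x" by (cases z) (auto simp: isb_def)
          have xM: "x \<in> M" using zL z MS_Lam_iff by simp
          have "b = \<sigma> x"
          proof (cases b)
            case True then show ?thesis using mS m z by (simp add: \<sigma>_def)
          next
            case False
            have "(MS x, True) \<notin> S"
            proof
              assume "(MS x, True) \<in> S"
              then have "\<Phi> S = 0" using dbl[OF D Sm zL[unfolded z], of True False] mS m z False by simp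
              then show False using nz by simp
            qed
            then show ?thesis using False by (simp add: \<sigma>_def)
          qed
          then show "m \<in> conf \<sigma>" using m z xM by (auto simp: conf_def)
        qed
        moreover have "finite (conf \<sigma>)" by (simp add: conf_def finM)
        ultimately have "S = conf \<sigma>" using card_subset_eq cS conf_card by metis
        then show False using nz Z by simp
      qed
    qed
  next
    case (Suc n)
    show ?case
    proof (intro allI impI)
      fix S assume b: "bc S = Suc n" and Sm: "S \<subseteq> modes M B"
      have fS: "finite S" using Sm finMd finite_subset by blast
      have "{m\<in>S. isb (fst m)} \<noteq> {}" using b unfolding bc_def by (metis card.empty nat.distinct(1))
      then obtain v \<rho> where m: "(v,\<rho>) \<in> S" "isb v" by auto
      have vL: "v \<in> Lam M B" using m Sm by auto
      define S0 where "S0 = S - {(v,\<rho>)}"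
      have S0: "S0 \<subseteq> modes M B" "(v,\<rho>) \<notin> S0" "insert (v,\<rho>) S0 = S" using Sm m by (auto simp: S0_def)
      have IH0: "\<Phi> (insert (MS p, r) S0) = 0" if p: "p \<in> M" for p r
      proof -
        have "{m'\<in>insert (MS p, r) S0. isb (fst m')} = {m'\<in>S. isb (fst m')} - {(v,\<rho>)}"
          using m by (auto simp: S0_def isb_def)
        then have "bc (insert (MS p, r) S0) = n" using b fS m unfolding bc_def by simp
        moreover have "insert (MS p, r) S0 \<subseteq> modes M B" using S0(1) p MS_Lam_iff by auto
        ultimately show ?thesis using Suc.IH by blast
      qed
      have A0: "ann (MS p, r) \<Phi> S0 = 0" if "p \<in> M" for p r
        using IH0[OF that] by (simp add: ann_def)
      have "\<exists>x y. (x,y) \<in> B \<and> (v = OS x y \<or> v = OB x y)"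
        using vL m(2) by (auto simp: Lam_def Osites_def OBsites_def isb_def)
      then obtain x y where xy: "(x,y) \<in> B" and v: "v = OS x y \<or> v = OB x y" by blast
      have xyM: "x \<in> M" "y \<in> M" using B_M[OF xy] by auto
      from v show "\<Phi> S = 0"
      proof
        assume v: "v = OS x y"
        have "fsign S0 (v,\<rho>) * \<Phi> S = 0"
          using relOS[OF Bc xy S0(1), of \<rho>] S0(2,3) A0 xyM v by simp
        then show ?thesis by simp
      next
        assume v: "v = OB x y"
        have "fsign S0 (v,\<rho>) * \<Phi> S = 0"
          using relOB[OF Bc xy S0(1), of \<rho>] S0(2,3) A0 xyM v by simp
        then show ?thesis by simp
      qed
    qed
  qed
  show ?thesis
  proof
    fix S
    show "\<Phi> S = 0"
    proof (cases "S \<subseteq> modes M B")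
      case True then show ?thesis using main by blast
    next
      case False then show ?thesis using Ne unfolding Ne_space_def by blast
    qed
  qed
qed

end

context hub begin

lemma swap_edge: assumes W: "Wp \<Phi>" and xy: "(x,y) \<in> B" and Z: "\<Phi> (conf \<sigma>) = 0"
  shows "\<Phi> (conf (\<sigma>(x := \<sigma> y, y := \<sigma> x))) = 0"
proof (cases "\<sigma> x = \<sigma> y")
  case True
  then have "\<sigma>(x := \<sigma> y, y := \<sigma> x) = \<sigma>" by (auto simp: fun_eq_iff)
  then show ?thesis using Z by simp
next
  case False
  have D: "condD \<Phi>" and Bc: "condB \<Phi>" using W by (auto simp: Wp_def)
  have xyM: "x \<in> M" "y \<in> M" and nxy: "x \<noteq> y" using B_M[OF xy] B_neq[OF xy] by auto
  define \<alpha> where "\<alpha> = \<sigma> x"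
  define \<beta> where "\<beta> = \<sigma> y"
  have ab: "\<alpha> \<noteq> \<beta>" "\<beta> \<noteq> \<alpha>" using False by (auto simp: \<alpha>_def \<beta>_def)
  define u where "u = OS x y"
  have uL: "u \<in> Lam M B" using OS_Lam[OF xy] by (simp add: u_def)
  have xL: "MS x \<in> Lam M B" and yL: "MS y \<in> Lam M B" using xyM MS_Lam_iff by auto
  define R where "R = (\<lambda>z. (MS z, \<sigma> z)) ` (M - {x,y})"
  have Rm: "R \<subseteq> modes M B" by (auto simp: R_def Lam_def)
  have uR: "(u,r) \<notin> R" for r by (auto simp: R_def u_def)
  have xR: "(MS x,r) \<notin> R" for r by (auto simp: R_def)
  have yR: "(MS y,r) \<notin> R" for r by (auto simp: R_def)
  have Mi: "M = insert x (insert y (M - {x,y}))" using xyM by auto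
  have c1: "conf \<sigma> = insert (MS x,\<alpha>) (insert (MS y,\<beta>) R)"
  proof -
    have "conf \<sigma> = (\<lambda>z. (MS z, \<sigma> z)) ` (insert x (insert y (M - {x,y})))"
      unfolding conf_def by (rule arg_cong[OF Mi])
    then show ?thesis by (simp add: R_def \<alpha>_def \<beta>_def)
  qed
  have c2: "conf (\<sigma>(x := \<sigma> y, y := \<sigma> x)) = insert (MS x,\<beta>) (insert (MS y,\<alpha>) R)"
  proof -
    let ?s = "\<sigma>(x := \<sigma> y, y := \<sigma> x)"
    have "conf ?s = (\<lambda>z. (MS z, ?s z)) ` (insert x (insert y (M - {x,y})))"
      unfolding conf_def by (rule arg_cong[OF Mi])
    moreover have "(\<lambda>z. (MS z, ?s z)) ` (M - {x,y}) = R" unfolding R_def by (rule image_cong) auto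
    ultimately show ?thesis using nxy by (simp add: \<alpha>_def \<beta>_def)
  qed
  have mu0: "mu \<noteq> 0" using mupos by simp
  have d_u: "\<Phi> (insert (u,\<alpha>) (insert (u,\<beta>) R)) = 0"
    by (rule dbl[OF D _ uL, of _ \<alpha> \<beta>]) (use Rm uL ab in auto)
  have P1: "\<Phi> (insert (u,\<beta>) (insert (MS x,\<alpha>) R)) = 0"
  proof -
    have S1: "insert (MS x,\<alpha>) R \<subseteq> modes M B" "(OS x y,\<beta>) \<notin> insert (MS x,\<alpha>) R"
      using Rm xL uR[of \<beta>] by (auto simp: u_def)
    have a1: "ann (MS x,\<beta>) \<Phi> (insert (MS x,\<alpha>) R) = 0"
    proof -
      have h: "\<Phi> (insert (MS x,\<beta>) (insert (MS x,\<alpha>) R)) = 0"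
        by (rule dbl[OF D _ xL, of _ \<beta> \<alpha>]) (use Rm xL ab in auto)
      show ?thesis unfolding ann_def h by simp
    qed
    have a2: "ann (MS y,\<beta>) \<Phi> (insert (MS x,\<alpha>) R) = 0"
    proof -
      have "insert (MS y,\<beta>) (insert (MS x,\<alpha>) R) = conf \<sigma>" using c1 by auto
      then have h: "\<Phi> (insert (MS y,\<beta>) (insert (MS x,\<alpha>) R)) = 0" using Z by simp
      show ?thesis unfolding ann_def h by simp
    qed
    have "fsign (insert (MS x,\<alpha>) R) (u,\<beta>) * \<Phi> (insert (u,\<beta>) (insert (MS x,\<alpha>) R)) = 0"
      using relOS[OF Bc xy S1] a1 a2 by (simp add: u_def)
    then show ?thesis by simp
  qed
  have P2: "\<Phi> (insert (MS y,\<alpha>) (insert (u,\<beta>) R)) = 0"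
  proof -
    have S0: "insert (u,\<beta>) R \<subseteq> modes M B" "(OS x y,\<alpha>) \<notin> insert (u,\<beta>) R"
      using Rm uL uR[of \<alpha>] ab by (auto simp: u_def)
    have e: "fsign (insert (u,\<beta>) R) (u,\<alpha>) * \<Phi> (insert (u,\<alpha>) (insert (u,\<beta>) R))
        = mu * (ann (MS x,\<alpha>) \<Phi> (insert (u,\<beta>) R) + ann (MS y,\<alpha>) \<Phi> (insert (u,\<beta>) R))"
      using relOS[OF Bc xy S0] by (simp add: u_def)
    have a1: "ann (MS x,\<alpha>) \<Phi> (insert (u,\<beta>) R) = 0"
    proof -
      have "insert (MS x,\<alpha>) (insert (u,\<beta>) R) = insert (u,\<beta>) (insert (MS x,\<alpha>) R)" by auto
      then have h: "\<Phi> (insert (MS x,\<alpha>) (insert (u,\<beta>) R)) = 0" using P1 by simp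
      show ?thesis unfolding ann_def h by simp
    qed
    have "ann (MS y,\<alpha>) \<Phi> (insert (u,\<beta>) R) = 0" using e d_u a1 mu0 by simp
    moreover have "(MS y,\<alpha>) \<notin> insert (u,\<beta>) R" using yR by (auto simp: u_def)
    ultimately show ?thesis unfolding ann_def by (simp split: if_splits)
  qed
  have S2: "insert (MS y,\<alpha>) R \<subseteq> modes M B" "(OS x y,\<beta>) \<notin> insert (MS y,\<alpha>) R"
    using Rm yL uR[of \<beta>] by (auto simp: u_def)
  have e: "fsign (insert (MS y,\<alpha>) R) (u,\<beta>) * \<Phi> (insert (u,\<beta>) (insert (MS y,\<alpha>) R))
      = mu * (ann (MS x,\<beta>) \<Phi> (insert (MS y,\<alpha>) R) + ann (MS y,\<beta>) \<Phi> (insert (MS y,\<alpha>) R))"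
    using relOS[OF Bc xy S2] by (simp add: u_def)
  have z1: "\<Phi> (insert (u,\<beta>) (insert (MS y,\<alpha>) R)) = 0"
  proof -
    have "insert (u,\<beta>) (insert (MS y,\<alpha>) R) = insert (MS y,\<alpha>) (insert (u,\<beta>) R)" by auto
    then show ?thesis using P2 by simp
  qed
  have a2: "ann (MS y,\<beta>) \<Phi> (insert (MS y,\<alpha>) R) = 0"
  proof -
    have h: "\<Phi> (insert (MS y,\<beta>) (insert (MS y,\<alpha>) R)) = 0"
      by (rule dbl[OF D _ yL, of _ \<beta> \<alpha>]) (use Rm yL ab in auto)
    show ?thesis unfolding ann_def h by simp
  qed
  have "ann (MS x,\<beta>) \<Phi> (insert (MS y,\<alpha>) R) = 0" using e z1 a2 mu0 by simp
  moreover have "(MS x,\<beta>) \<notin> insert (MS y,\<alpha>) R" using xR nxy by auto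
  ultimately have "\<Phi> (insert (MS x,\<beta>) (insert (MS y,\<alpha>) R)) = 0" unfolding ann_def by (simp split: if_splits)
  then show ?thesis using c2 by simp
qed

end

definition swp :: "'a \<Rightarrow> 'a \<Rightarrow> ('a \<Rightarrow> bool) \<Rightarrow> ('a \<Rightarrow> bool)" where
  "swp x y \<sigma> = \<sigma>(x := \<sigma> y, y := \<sigma> x)"

lemma swp_same[simp]: "swp x x \<sigma> = \<sigma>" by (auto simp: swp_def fun_eq_iff)
lemma swp_sym: "swp x y \<sigma> = swp y x \<sigma>" by (auto simp: swp_def fun_eq_iff)
lemma swp_inv[simp]: "swp x y (swp x y \<sigma>) = \<sigma>" by (auto simp: swp_def fun_eq_iff)
lemma swp_comp: "x \<noteq> y \<Longrightarrow> y \<noteq> z \<Longrightarrow> x \<noteq> z \<Longrightarrow> swp x z \<sigma> = swp x y (swp y z (swp x y \<sigma>))"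
  by (auto simp: swp_def fun_eq_iff)

context hub begin

lemma swap_E: assumes W: "Wp \<Phi>" and e: "(x,y) \<in> Edg B" and Z: "\<Phi> (conf \<sigma>) = 0"
  shows "\<Phi> (conf (swp x y \<sigma>)) = 0"
proof -
  from e consider "(x,y) \<in> B" | "(y,x) \<in> B" by (auto simp: Edg_def)
  then show ?thesis
  proof cases
    case 1 then show ?thesis using swap_edge[OF W 1 Z] by (simp add: swp_def)
  next
    case 2 then show ?thesis using swap_edge[OF W 2 Z] B_neq[OF 2] by (simp add: swp_def fun_upd_twist)
  qed
qed

lemma swap_path: assumes W: "Wp \<Phi>" and p: "(x,y) \<in> (Edg B)\<^sup>*"
  shows "\<forall>\<sigma>. \<Phi> (conf \<sigma>) = 0 \<longrightarrow> \<Phi> (conf (swp x y \<sigma>)) = 0"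
  using p
proof (induction rule: rtrancl_induct)
  case base then show ?case by simp
next
  case (step y z)
  show ?case
  proof (intro allI impI)
    fix \<sigma> assume Z: "\<Phi> (conf \<sigma>) = 0"
    show "\<Phi> (conf (swp x z \<sigma>)) = 0"
    proof (cases "x = z")
      case True then show ?thesis using Z by simp
    next
      case xz: False
      show ?thesis
      proof (cases "y = x")
        case True then show ?thesis using swap_E[OF W step(2) Z] by simp
      next
        case yx: False
        show ?thesis
        proof (cases "y = z")
          case True then show ?thesis using step.IH Z by simp
        next
          case yz: False
          have "\<Phi> (conf (swp x y \<sigma>)) = 0" using step.IH Z by blast
          then have "\<Phi> (conf (swp y z (swp x y \<sigma>))) = 0" using swap_E[OF W step(2)] by blast
          then have "\<Phi> (conf (swp x y (swp y z (swp x y \<sigma>)))) = 0" using step.IH by blast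
          then show ?thesis using swp_comp[of x y z \<sigma>] yx yz xz by metis
        qed
      qed
    qed
  qed
qed

lemma swap_any: "Wp \<Phi> \<Longrightarrow> x \<in> M \<Longrightarrow> y \<in> M \<Longrightarrow> \<Phi> (conf \<sigma>) = 0 \<Longrightarrow> \<Phi> (conf (swp x y \<sigma>)) = 0"
  using swap_path conn by blast

definition Dn :: "('a \<Rightarrow> bool) \<Rightarrow> 'a set" where "Dn \<sigma> = {x\<in>M. \<not> \<sigma> x}"

lemma finDn: "finite (Dn \<sigma>)" using finM by (simp add: Dn_def)

lemma prop_count: assumes W: "Wp \<Phi>" and Z0: "\<Phi> (conf \<sigma>0) = 0"
  shows "card (Dn \<sigma>) = card (Dn \<sigma>0) \<Longrightarrow> \<Phi> (conf \<sigma>) = 0"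
proof (induction "card (Dn \<sigma> - Dn \<sigma>0)" arbitrary: \<sigma> rule: less_induct)
  case less
  show ?case
  proof (cases "Dn \<sigma> - Dn \<sigma>0 = {}")
    case True
    then have "Dn \<sigma> \<subseteq> Dn \<sigma>0" by auto
    then have "Dn \<sigma> = Dn \<sigma>0" using less.prems finDn card_subset_eq by metis
    then have "conf \<sigma> = conf \<sigma>0" by (intro conf_cong) (auto simp: Dn_def set_eq_iff)
    then show ?thesis using Z0 by simp
  next
    case False
    then obtain p where p: "p \<in> Dn \<sigma>" "p \<notin> Dn \<sigma>0" by auto
    have "Dn \<sigma>0 - Dn \<sigma> \<noteq> {}"
    proof
      assume "Dn \<sigma>0 - Dn \<sigma> = {}"
      then have "Dn \<sigma>0 \<subseteq> Dn \<sigma>" by auto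
      then have "Dn \<sigma>0 = Dn \<sigma>" using less.prems finDn card_subset_eq by metis
      then show False using p by simp
    qed
    then obtain q where q: "q \<in> Dn \<sigma>0" "q \<notin> Dn \<sigma>" by auto
    have pq: "p \<in> M" "q \<in> M" "p \<noteq> q" "\<not> \<sigma> p" "\<sigma> q" using p q by (auto simp: Dn_def)
    define \<sigma>' where "\<sigma>' = swp p q \<sigma>"
    have D': "Dn \<sigma>' = insert q (Dn \<sigma> - {p})" using pq by (auto simp: Dn_def \<sigma>'_def swp_def)
    have c': "card (Dn \<sigma>') = card (Dn \<sigma>)"
      unfolding D' using finDn p(1) q(2) by (simp add: card_Diff_singleton) (metis card_gt_0_iff Suc_pred emptyE)
    have "Dn \<sigma>' - Dn \<sigma>0 = (Dn \<sigma> - Dn \<sigma>0) - {p}" using D' q(1) by auto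
    moreover have "card ((Dn \<sigma> - Dn \<sigma>0) - {p}) < card (Dn \<sigma> - Dn \<sigma>0)"
      by (rule card_Diff1_less) (use p finDn in auto)
    ultimately have "card (Dn \<sigma>' - Dn \<sigma>0) < card (Dn \<sigma> - Dn \<sigma>0)" by simp
    then have "\<Phi> (conf \<sigma>') = 0" using less.hyps c' less.prems by simp
    then have "\<Phi> (conf (swp p q \<sigma>')) = 0" using swap_any[OF W pq(1,2)] by blast
    then show ?thesis by (simp add: \<sigma>'_def)
  qed
qed

lemma conf_Dn: "ndn (conf \<sigma>) = card (Dn \<sigma>)" by (simp add: conf_ndn Dn_def)

definition Dk :: "nat \<Rightarrow> 'a set" where "Dk k = (SOME D. D \<subseteq> M \<and> card D = k)"
definition rep :: "nat \<Rightarrow> 'a \<Rightarrow> bool" where "rep k = (\<lambda>x. x \<notin> Dk k)"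

lemma Dk: "k \<le> card M \<Longrightarrow> Dk k \<subseteq> M \<and> card (Dk k) = k"
  unfolding Dk_def by (rule someI_ex) (meson obtain_subset_with_card_n)

lemma rep_Dn: "k \<le> card M \<Longrightarrow> card (Dn (rep k)) = k"
proof -
  assume "k \<le> card M"
  then have "Dn (rep k) = Dk k" using Dk by (auto simp: Dn_def rep_def)
  then show ?thesis using Dk \<open>k \<le> card M\<close> by simp
qed

lemma Dn_le: "card (Dn \<sigma>) \<le> card M" unfolding Dn_def using finM by (simp add: card_mono)

lemma Wp_psi: "Wp (psi k)"
  unfolding Wp_def
proof (intro conjI)
  show "Ne_space M B (card M) (psi k)" using suppd_psi unfolding suppd_def Ne_space_def by blast
  show "condD (psi k)" using nodbl_psi unfolding nodbl_def condD_def by blast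
  show "condB (psi k)" using eB_psi unfolding condB_def by simp
qed

lemma psi_conf: "psi k (conf \<sigma>) \<noteq> 0 \<Longrightarrow> card (Dn \<sigma>) = k"
  using suppd_psi[of k] unfolding suppd_def conf_Dn[symmetric] by blast

lemma psi_rep_nz: assumes k: "k \<le> card M" shows "psi k (conf (rep k)) \<noteq> 0"
proof
  assume z: "psi k (conf (rep k)) = 0"
  have "\<forall>\<sigma>. psi k (conf \<sigma>) = 0"
  proof
    fix \<sigma>
    show "psi k (conf \<sigma>) = 0"
    proof (cases "card (Dn \<sigma>) = k")
      case True then show ?thesis using prop_count[OF Wp_psi z] rep_Dn[OF k] by simp
    next
      case False then show ?thesis using psi_conf by blast
    qed
  qed
  then have "psi k = (\<lambda>S. 0)" using uniq[OF Wp_psi] by blast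
  then show False using psi_nz[OF k] by simp
qed

end

context hub begin

lemmas AL_lin = linop_diff[OF linop_annL] linop_sum[OF linop_annL] linop_cmult[OF linop_annL]

lemma Wp_combo: assumes I: "finite I" and W: "\<And>k. k \<in> I \<Longrightarrow> Wp (f k)"
  shows "Wp (\<lambda>S. \<Sum>k\<in>I. c k * f k S)"
  unfolding Wp_def
proof (intro conjI)
  show "Ne_space M B (card M) (\<lambda>S. \<Sum>k\<in>I. c k * f k S)"
    unfolding Ne_space_def
  proof (intro allI impI)
    fix S assume "(\<Sum>k\<in>I. c k * f k S) \<noteq> 0"
    then obtain k where "k \<in> I" "c k * f k S \<noteq> 0" by (rule sum.not_neutral_contains_not_neutral)
    then show "S \<subseteq> modes M B \<and> card S = card M" using W[of k] unfolding Wp_def Ne_space_def by auto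
  qed
  show "condD (\<lambda>S. \<Sum>k\<in>I. c k * f k S)"
    unfolding condD_def using W unfolding Wp_def condD_def by (auto intro!: sum.neutral)
  show "condB (\<lambda>S. \<Sum>k\<in>I. c k * f k S)"
    unfolding condB_def using W unfolding Wp_def condB_def by (auto simp: AL_lin intro!: sum.neutral)
qed

lemma Wp_diff: assumes "Wp \<Phi>" "Wp \<Psi>" shows "Wp (\<lambda>S. \<Phi> S - \<Psi> S)"
  unfolding Wp_def
proof (intro conjI)
  show "Ne_space M B (card M) (\<lambda>S. \<Phi> S - \<Psi> S)"
    using assms unfolding Wp_def Ne_space_def by (metis diff_zero)
  show "condD (\<lambda>S. \<Phi> S - \<Psi> S)" using assms unfolding Wp_def condD_def by simp
  show "condB (\<lambda>S. \<Phi> S - \<Psi> S)" using assms unfolding Wp_def condB_def by (simp add: AL_lin)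
qed

lemma decomp: assumes W: "Wp \<Phi>" shows "\<exists>c. \<Phi> = (\<lambda>S. \<Sum>k<card M + 1. c k * psi k S)"
proof -
  define c where "c k = \<Phi> (conf (rep k)) / psi k (conf (rep k))" for k
  define \<Psi> where "\<Psi> = (\<lambda>S. \<Phi> S - (\<Sum>k<card M + 1. c k * psi k S))"
  have W\<Psi>: "Wp \<Psi>" unfolding \<Psi>_def by (intro Wp_diff W Wp_combo Wp_psi) simp
  have zr: "\<Psi> (conf (rep j)) = 0" if j: "j \<le> card M" for j
  proof -
    have "(\<Sum>k<card M + 1. c k * psi k (conf (rep j))) = (\<Sum>k<card M + 1. if k = j then c j * psi j (conf (rep j)) else 0)"
    proof (intro sum.cong refl)
      fix k
      show "c k * psi k (conf (rep j)) = (if k = j then c j * psi j (conf (rep j)) else 0)"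
        using psi_conf[of k "rep j"] rep_Dn[OF j] by auto
    qed
    also have "\<dots> = c j * psi j (conf (rep j))" using j by (simp add: sum.delta)
    also have "\<dots> = \<Phi> (conf (rep j))" using psi_rep_nz[OF j] by (simp add: c_def)
    finally show ?thesis by (simp add: \<Psi>_def)
  qed
  have "\<forall>\<sigma>. \<Psi> (conf \<sigma>) = 0"
  proof
    fix \<sigma>
    have j: "card (Dn \<sigma>) \<le> card M" by (rule Dn_le)
    show "\<Psi> (conf \<sigma>) = 0" using prop_count[OF W\<Psi> zr[OF j]] rep_Dn[OF j] by simp
  qed
  then have "\<Psi> = (\<lambda>S. 0)" using uniq[OF W\<Psi>] by blast
  then have "\<Phi> = (\<lambda>S. \<Sum>k<card M + 1. c k * psi k S)" unfolding \<Psi>_def by (auto simp: fun_eq_iff)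
  then show ?thesis by blast
qed

definition nrm :: "nat \<Rightarrow> real" where "nrm k = sqrt (nsq (psi k))"
definition phi :: "nat \<Rightarrow> 'a vec" where "phi k = (\<lambda>S. psi k S / complex_of_real (nrm k))"

lemma nsq_psi_pos: assumes k: "k \<le> card M" shows "nsq (psi k) > 0"
proof -
  have "nsq (psi k) \<noteq> 0"
  proof
    assume "nsq (psi k) = 0"
    then have "\<forall>S. S \<subseteq> modes M B \<longrightarrow> psi k S = 0" using nsq_iff by blast
    moreover have "\<forall>S. \<not> S \<subseteq> modes M B \<longrightarrow> psi k S = 0" using suppd_psi[of k] unfolding suppd_def by blast
    ultimately have "psi k = (\<lambda>S. 0)" by (auto simp: fun_eq_iff)
    then show False using psi_nz[OF k] by simp
  qed
  then show ?thesis using nsq_nonneg[of "psi k"] by simp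
qed

lemma nrm_pos: "k \<le> card M \<Longrightarrow> nrm k > 0"
  using nsq_psi_pos by (simp add: nrm_def)

lemma phi_ortho: assumes k: "k < card M + 1" and l: "l < card M + 1"
  shows "inner_F M B (phi k) (phi l) = (if k = l then 1 else 0)"
proof (cases "k = l")
  case True
  have r: "nrm k > 0" using nrm_pos k by simp
  have "inner_F M B (phi k) (phi k) = complex_of_real (\<Sum>S\<in>Pow (modes M B). (cmod (psi k S))\<^sup>2 / (nrm k)\<^sup>2)"
    unfolding inner_self phi_def using r by (simp add: norm_divide power_divide)
  also have "\<dots> = complex_of_real (nsq (psi k) / (nrm k)\<^sup>2)"
    by (simp add: nsq_def sum_divide_distrib)
  also have "\<dots> = 1" using nsq_psi_pos[of k] k by (simp add: nrm_def)
  finally show ?thesis using True by simp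
next
  case False
  have z: "cnj (phi k S) * phi l S = 0" for S
  proof (cases "psi k S = 0 \<or> psi l S = 0")
    case True then show ?thesis by (auto simp: phi_def)
  next
    case F: False
    then have "ndn S = k" "ndn S = l" using suppd_psi[of k] suppd_psi[of l] unfolding suppd_def by blast+
    then show ?thesis using False by simp
  qed
  have "inner_F M B (phi k) (phi l) = 0" unfolding inner_F_def by (intro sum.neutral ballI z)
  then show ?thesis using False by simp
qed

lemma phi_psi: "(\<lambda>S. \<Sum>k<card M + 1. c k * phi k S) = (\<lambda>S. \<Sum>k<card M + 1. (c k / complex_of_real (nrm k)) * psi k S)"
  by (simp add: phi_def)

lemma psi_phi: "(\<lambda>S. \<Sum>k<card M + 1. c k * psi k S) = (\<lambda>S. \<Sum>k<card M + 1. (c k * complex_of_real (nrm k)) * phi k S)"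
proof -
  have e: "c k * psi k S = (c k * complex_of_real (nrm k)) * phi k S" if "k < card M + 1" for k S
    using nrm_pos[of k] that by (simp add: phi_def)
  show ?thesis
  proof (intro ext sum.cong refl)
    fix S k assume "k \<in> {..<card M + 1}"
    then show "c k * psi k S = (c k * complex_of_real (nrm k)) * phi k S" using e by simp
  qed
qed

lemma linop_hop: "linop hop"
  unfolding hop_def[abs_def]
  by (intro linop_sumop1 linop_comp[OF linop_creL linop_annL])

lemma linop_Ssq: "linop (Stot_sq M B)"
proof -
  have e: "Stot_sq M B = (\<lambda>\<psi> S. (Stot M B Splus (Stot M B Sminus \<psi>) S + Stot M B Sminus (Stot M B Splus \<psi>) S) / 2
    + Stot M B S3 (Stot M B S3 \<psi>) S)"
    by (intro ext) (rule Ssq)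
  show ?thesis unfolding e linop_def
    by (simp add: Sm_lin Sp_lin Sz_lin fun_eq_iff field_simps)
qed

lemma Wp_combo_psi: "Wp (\<lambda>S. \<Sum>k<card M + 1. c k * psi k S)"
  by (intro Wp_combo Wp_psi) simp

lemma hop_combo: "hop (\<lambda>S. \<Sum>k<card M + 1. c k * psi k S) = (\<lambda>S. 0)"
  by (simp only: linop_sum[OF linop_hop] linop_cmult[OF linop_hop] hop_psi) simp

lemma Ssq_combo: "Stot_sq M B (\<lambda>S. \<Sum>k<card M + 1. c k * psi k S) =
   (\<lambda>S. complex_of_real ((real (card M) / 2) * (real (card M) / 2 + 1)) * (\<Sum>k<card M + 1. c k * psi k S))"
  by (simp only: linop_sum[OF linop_Ssq] linop_cmult[OF linop_Ssq] Ssq_psi sum_distrib_left mult.left_commute)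

lemma Wp_iff: "Wp \<Phi> \<longleftrightarrow> Ne_space M B (card M) \<Phi> \<and> finite_energy M B zeta mu t \<Phi>"
  unfolding Wp_def fin_iff2 by simp

lemma lim_zero: assumes "Wp \<Psi>" shows "lim_energy M B zeta mu t \<Psi> = 0"
proof -
  obtain c where c: "\<Psi> = (\<lambda>S. \<Sum>k<card M + 1. c k * psi k S)" using decomp[OF assms] by blast
  have "hop \<Psi> = (\<lambda>S. 0)" unfolding c by (rule hop_combo)
  then have "eT \<Psi> = 0" by (simp add: eT_def inner_F_def)
  then show ?thesis using lim_val assms Wp_iff by simp
qed

lemma main_result:
  shows "(\<forall>\<Phi>. ground_state M B zeta mu t (card M) \<Phi> \<longrightarrow>
            Stot_sq M B \<Phi> = (\<lambda>S. complex_of_real ((real (card M) / 2) * (real (card M) / 2 + 1)) * \<Phi> S))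
       \<and> (\<exists>\<phi> :: nat \<Rightarrow> 'a vec.
            (\<forall>k < card M + 1. \<forall>l < card M + 1. inner_F M B (\<phi> k) (\<phi> l) = (if k = l then 1 else 0))
          \<and> (\<forall>\<Phi>. ground_state M B zeta mu t (card M) \<Phi> \<longleftrightarrow>
                 (inner_F M B \<Phi> \<Phi> = 1 \<and> (\<exists>c. \<Phi> = (\<lambda>S. \<Sum>k < card M + 1. c k * \<phi> k S)))))"
proof -
  have gs: "ground_state M B zeta mu t (card M) \<Phi> \<longleftrightarrow> Wp \<Phi> \<and> inner_F M B \<Phi> \<Phi> = 1" for \<Phi>
  proof
    assume "ground_state M B zeta mu t (card M) \<Phi>"
    then show "Wp \<Phi> \<and> inner_F M B \<Phi> \<Phi> = 1" unfolding ground_state_def Wp_iff by blast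
  next
    assume a: "Wp \<Phi> \<and> inner_F M B \<Phi> \<Phi> = 1"
    show "ground_state M B zeta mu t (card M) \<Phi>"
      unfolding ground_state_def
      using a lim_zero[of \<Phi>] lim_zero Wp_iff by auto
  qed
  have part1: "\<forall>\<Phi>. ground_state M B zeta mu t (card M) \<Phi> \<longrightarrow>
            Stot_sq M B \<Phi> = (\<lambda>S. complex_of_real ((real (card M) / 2) * (real (card M) / 2 + 1)) * \<Phi> S)"
  proof (intro allI impI)
    fix \<Phi> assume "ground_state M B zeta mu t (card M) \<Phi>"
    then have "Wp \<Phi>" using gs by blast
    then obtain c where c: "\<Phi> = (\<lambda>S. \<Sum>k<card M + 1. c k * psi k S)" using decomp by blast
    show "Stot_sq M B \<Phi> = (\<lambda>S. complex_of_real ((real (card M) / 2) * (real (card M) / 2 + 1)) * \<Phi> S)"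
      unfolding c by (rule Ssq_combo)
  qed
  have part2: "ground_state M B zeta mu t (card M) \<Phi> \<longleftrightarrow>
                 (inner_F M B \<Phi> \<Phi> = 1 \<and> (\<exists>c. \<Phi> = (\<lambda>S. \<Sum>k < card M + 1. c k * phi k S)))" for \<Phi>
  proof -
    have "Wp \<Phi> \<longleftrightarrow> (\<exists>c. \<Phi> = (\<lambda>S. \<Sum>k < card M + 1. c k * phi k S))"
    proof
      assume "Wp \<Phi>"
      then obtain c where "\<Phi> = (\<lambda>S. \<Sum>k<card M + 1. c k * psi k S)" using decomp by blast
      then have h: "\<Phi> = (\<lambda>S. \<Sum>k<card M + 1. (c k * complex_of_real (nrm k)) * phi k S)" unfolding psi_phi .
      show "\<exists>c. \<Phi> = (\<lambda>S. \<Sum>k < card M + 1. c k * phi k S)"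
        by (rule exI[where x="\<lambda>k. c k * complex_of_real (nrm k)"]) (rule h)
    next
      assume "\<exists>c. \<Phi> = (\<lambda>S. \<Sum>k < card M + 1. c k * phi k S)"
      then obtain c where "\<Phi> = (\<lambda>S. \<Sum>k < card M + 1. c k * phi k S)" by blast
      then have "\<Phi> = (\<lambda>S. \<Sum>k<card M + 1. (c k / complex_of_real (nrm k)) * psi k S)" unfolding phi_psi .
      then show "Wp \<Phi>" using Wp_combo_psi[of "\<lambda>k. c k / complex_of_real (nrm k)"] by simp
    qed
    then show ?thesis using gs by blast
  qed
  show ?thesis using part1 part2 phi_ortho by blast
qed

end

theorem theorem1:
  fixes M :: "'a::linorder set" and B :: "('a \<times> 'a) set"
    and zeta :: nat and mu t :: real
  assumes "finite M"
    and "B \<subseteq> M \<times> M"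
    and "\<forall>(x,y)\<in>B. x \<noteq> y"
    and "\<forall>x y. (x,y) \<in> B \<longrightarrow> (y,x) \<notin> B"
    and "\<forall>x\<in>M. \<forall>y\<in>M. (x,y) \<in> (Edg B)\<^sup>*"
    and "\<forall>x\<in>M. card {y. (x,y) \<in> Edg B} = zeta"
    and "mu > 0" and "t > 0"
  shows "(\<forall>\<Phi>. ground_state M B zeta mu t (card M) \<Phi> \<longrightarrow>
            Stot_sq M B \<Phi> = (\<lambda>S. complex_of_real ((real (card M) / 2) * (real (card M) / 2 + 1)) * \<Phi> S))
       \<and> (\<exists>\<phi> :: nat \<Rightarrow> 'a vec.
            (\<forall>k < card M + 1. \<forall>l < card M + 1. inner_F M B (\<phi> k) (\<phi> l) = (if k = l then 1 else 0))
          \<and> (\<forall>\<Phi>. ground_state M B zeta mu t (card M) \<Phi> \<longleftrightarrow>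
                 (inner_F M B \<Phi> \<Phi> = 1 \<and> (\<exists>c. \<Phi> = (\<lambda>S. \<Sum>k < card M + 1. c k * \<phi> k S)))))"
proof -
  interpret hub M B zeta mu t
    apply unfold_locales
    using assms by auto
  show ?thesis by (rule main_result)
qed

end
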